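(* Let $1\le k<N$, let $\sigma_{k+1}$ be the $(k+1)$-th largest singular value of $\hat A$, and let $d_{\min}=\min_{x\in\mathcal X}d_x$. Let $f^*:\mathcal{X}\to\mathbb{R}^k$ be any minimizer of $\mathcal{L}_{\text{ACA-PC}}$ over all functions $\mathcal X\to\mathbb{R}^k$. Then for all $x_1,x_2\in\mathcal X$, $$d_{\text{post}}^2(x_1,x_2)-\frac{2\sigma_{k+1}^2}{d_{\min}}\big(1-\delta_{x_1x_2}\big)\;\le\;\|f^*(x_1)-f^*(x_2)\|_2^2\;\le\;d_{\text{post}}^2(x_1,x_2),$$ where $\delta_{x_1x_2}=1$ if $x_1=x_2$ and $0$ otherwise, and $$d_{\text{post}}^2(x_1,x_2)=\sum_{\bar x\in\bar{\mathcal X}}\big(p_{\mathcal A}(\bar x\mid x_1)-p_{\mathcal A}(\bar x\mid x_2)\big)^2,\qquad p_{\mathcal A}(\bar x\mid x)=\frac{p(x\mid\bar x)p(\bar x)}{p_{\mathcal A}(x)}.$$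
   Context: Setting: $\bar{\mathcal{X}}$ is a finite set of "natural data" with $|\bar{\mathcal X}|=N$, equipped with the uniform distribution $p(\bar x)=1/N$. $\mathcal{X}$ is a finite set of "augmented data" with $|\mathcal X|=L>N$. For each $\bar x\in\bar{\mathcal X}$, $p(\cdot\mid\bar x)$ is a probability distribution on $\mathcal X$ (the augmentation distribution). Let $A\in\mathbb{R}^{N\times L}$ with $A_{\bar x,x}=p(x\mid\bar x)$. For $x\in\mathcal X$ let $d_x=\sum_{\bar x\in\bar{\mathcal X}}p(x\mid\bar x)$, assumed $>0$ for all $x$, and $D=\operatorname{diag}(d_x)_{x\in\mathcal X}$. The normalized augmentation feature matrix is $\hat A=AD^{-1/2}\in\mathbb{R}^{N\times L}$. The marginal distribution of augmented data is $p_{\mathcal A}(x)=\sum_{\bar x}p(x\mid\bar x)p(\bar x)=d_x/N$. For $f:\mathcal X\to\mathbb{R}^k$, $$\mathcal{L}_{\text{ACA-PC}}(f)=-2\,\mathbb{E}_{\bar x\sim p(\bar x),\,x_i\sim p(\cdot\mid\bar x),\,x_j\sim p(\cdot\mid\bar x)}\big[f(x_i)^\top f(x_j)\big]+N\,\mathbb{E}_{x_1\sim p_{\mathcal A},\,x_2\sim p_{\mathcal A}}\Big[\big(f(x_1)^\top f(x_2)\big)^2\Big],$$ with $x_i,x_j$ independent given $\bar x$ and $x_1,x_2$ independent. (Minimizing over all functions corresponds to the paper's assumption that the encoder $f_\theta$ is universal.) *)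

theory Defs
  imports Complex_Main "HOL-Library.Multiset" "Jordan_Normal_Form.Char_Poly"
begin

text \<open>Conventions. Natural data are indexed by {0..<N}, augmented data by {0..<L}.
  P xb x = p(x | xb). Functions f : X -> R^k are represented as f x j, j < k.\<close>

definition deg :: "nat \<Rightarrow> (nat \<Rightarrow> nat \<Rightarrow> real) \<Rightarrow> nat \<Rightarrow> real" where
  "deg N P x = (\<Sum>xb<N. P xb x)"

definition aug_feature :: "nat \<Rightarrow> nat \<Rightarrow> (nat \<Rightarrow> nat \<Rightarrow> real) \<Rightarrow> real mat" where
  "aug_feature N L P = mat N L (\<lambda>(xb, x). P xb x)"

definition norm_aug_feature :: "nat \<Rightarrow> nat \<Rightarrow> (nat \<Rightarrow> nat \<Rightarrow> real) \<Rightarrow> real mat" where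
  "norm_aug_feature N L P =
     aug_feature N L P * mat L L (\<lambda>(i, j). if i = j then 1 / sqrt (deg N P i) else 0)"

definition singular_values :: "real mat \<Rightarrow> real list" where
  "singular_values M =
     (let G = (if dim_row M \<le> dim_col M then M * transpose_mat M else transpose_mat M * M)
      in map sqrt (rev (sorted_list_of_multiset (proots (char_poly G)))))"

definition p_bar :: "nat \<Rightarrow> nat \<Rightarrow> real" where
  "p_bar N xb = 1 / real N"

definition p_A :: "nat \<Rightarrow> (nat \<Rightarrow> nat \<Rightarrow> real) \<Rightarrow> nat \<Rightarrow> real" where
  "p_A N P x = (\<Sum>xb<N. P xb x * p_bar N xb)"

definition post :: "nat \<Rightarrow> (nat \<Rightarrow> nat \<Rightarrow> real) \<Rightarrow> nat \<Rightarrow> nat \<Rightarrow> real" where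
  "post N P xb x = P xb x * p_bar N xb / p_A N P x"

definition d_post_sq :: "nat \<Rightarrow> (nat \<Rightarrow> nat \<Rightarrow> real) \<Rightarrow> nat \<Rightarrow> nat \<Rightarrow> real" where
  "d_post_sq N P x1 x2 = (\<Sum>xb<N. (post N P xb x1 - post N P xb x2)^2)"

definition inner_k :: "nat \<Rightarrow> (nat \<Rightarrow> nat \<Rightarrow> real) \<Rightarrow> nat \<Rightarrow> nat \<Rightarrow> real" where
  "inner_k k f x y = (\<Sum>j<k. f x j * f y j)"

definition loss_ACA_PC ::
  "nat \<Rightarrow> nat \<Rightarrow> nat \<Rightarrow> (nat \<Rightarrow> nat \<Rightarrow> real) \<Rightarrow> (nat \<Rightarrow> nat \<Rightarrow> real) \<Rightarrow> real" where
  "loss_ACA_PC N L k P f =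
     - 2 * (\<Sum>xb<N. \<Sum>xi<L. \<Sum>xj<L. p_bar N xb * P xb xi * P xb xj * inner_k k f xi xj)
     + real N * (\<Sum>x1<L. \<Sum>x2<L. p_A N P x1 * p_A N P x2 * (inner_k k f x1 x2)^2)"

end

theory Submission
  imports Defs "HOL-Computational_Algebra.Fundamental_Theorem_Algebra" "HOL-Combinatorics.Permutations"
begin


lemma kernel_nontriv:
  fixes A :: "nat \<Rightarrow> nat \<Rightarrow> real"
  assumes "m < n"
  shows "\<exists>x. (\<exists>a<n. x a \<noteq> 0) \<and> (\<forall>i<m. (\<Sum>a<n. A i a * x a) = 0)"
proof -
  define B where "B = mat n n (\<lambda>(i,a). if i < m then A i a else 0)"
  have B: "B \<in> carrier_mat n n" unfolding B_def by auto
  have "B = mat\<^sub>r n n (\<lambda>i. if i = n - 1 then 0\<^sub>v n else row B i)"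
    by (rule eq_matI, insert assms, auto simp: B_def)
  hence "det B = 0" using det_row_0[of "n-1" n "\<lambda>i. row B i"] assms B by auto
  then obtain v where v: "v \<in> carrier_vec n" "v \<noteq> 0\<^sub>v n" "B *\<^sub>v v = 0\<^sub>v n"
    using det_0_iff_vec_prod_zero_field[OF B] by auto
  have "\<exists>a<n. v $ a \<noteq> 0" using v by (metis carrier_vecD eq_vecI index_zero_vec(1) index_zero_vec(2))
  moreover have "(\<Sum>a<n. A i a * v $ a) = 0" if "i < m" for i
  proof -
    have "(B *\<^sub>v v) $ i = 0" using v that assms by simp
    moreover have "(B *\<^sub>v v) $ i = (\<Sum>a<n. A i a * v $ a)" using that assms v(1) unfolding B_def
      by (auto simp: scalar_prod_def lessThan_atLeast0 intro: sum.cong)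
    ultimately show ?thesis by simp
  qed
  ultimately show ?thesis by blast
qed

lemma real_eigvec:
  fixes S :: "nat \<Rightarrow> nat \<Rightarrow> real"
  assumes n: "0 < n" and sym: "\<And>a b. a < n \<Longrightarrow> b < n \<Longrightarrow> S a b = S b a"
  shows "\<exists>\<mu> x. (\<exists>a<n. x a \<noteq> 0) \<and> (\<forall>a<n. (\<Sum>b<n. S a b * x b) = \<mu> * x a)"
proof -
  define A where "A = mat n n (\<lambda>(a,b). S a b)"
  have A: "A \<in> carrier_mat n n" unfolding A_def by auto
  define Ac :: "complex mat" where "Ac = of_real_hom.mat_hom A"
  have Ac: "Ac \<in> carrier_mat n n" unfolding Ac_def using A by auto
  have cp: "char_poly Ac = map_poly of_real (char_poly A)"
    unfolding Ac_def by (rule of_real_hom.char_poly_hom[OF A])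
  have "degree (char_poly Ac) = n" using degree_monic_char_poly[OF Ac] by auto
  hence "\<not> constant (poly (char_poly Ac))" using n by (simp add: constant_degree)
  then obtain z where "poly (char_poly Ac) z = 0" using fundamental_theorem_of_algebra by blast
  hence "eigenvalue Ac z" using eigenvalue_root_char_poly[OF Ac] by auto
  then obtain v where ev: "eigenvector Ac v z" unfolding eigenvalue_def by auto
  hence v: "v \<in> carrier_vec n" "v \<noteq> 0\<^sub>v n" "Ac *\<^sub>v v = z \<cdot>\<^sub>v v"
    unfolding eigenvector_def using Ac by auto
  have eq: "(\<Sum>b<n. complex_of_real (S a b) * v $ b) = z * v $ a" if "a < n" for a
  proof -
    have "(Ac *\<^sub>v v) $ a = (z \<cdot>\<^sub>v v) $ a" using v(3) by simp
    moreover have "(Ac *\<^sub>v v) $ a = (\<Sum>b<n. complex_of_real (S a b) * v $ b)"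
      using that v(1) unfolding Ac_def A_def
      by (auto simp: scalar_prod_def lessThan_atLeast0 intro: sum.cong)
    ultimately show ?thesis using that v(1) by simp
  qed
  obtain a0 where a0: "a0 < n" "v $ a0 \<noteq> 0" using v(1,2)
    by (metis carrier_vecD eq_vecI index_zero_vec(1) index_zero_vec(2))
  define X where "X = (\<Sum>a<n. \<Sum>b<n. complex_of_real (S a b) * cnj (v $ a) * v $ b)"
  define r where "r = (\<Sum>a<n. (Re (v $ a))^2 + (Im (v $ a))^2)"
  have rpos: "r > 0" unfolding r_def
    by (rule sum_pos2[of _ a0], insert a0, auto simp: complex_eq_iff add_pos_nonneg add_nonneg_pos)
  have X1: "X = z * complex_of_real r"
  proof -
    have "X = (\<Sum>a<n. cnj (v $ a) * (\<Sum>b<n. complex_of_real (S a b) * v $ b))"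
      unfolding X_def by (auto simp: sum_distrib_left mult_ac intro!: sum.cong)
    also have "\<dots> = (\<Sum>a<n. z * (cnj (v $ a) * v $ a))" by (rule sum.cong, simp, subst eq, auto)
    also have "\<dots> = z * complex_of_real r" unfolding r_def
      by (simp add: sum_distrib_left complex_mult_cnj mult.commute[of "cnj _"])
    finally show ?thesis .
  qed
  have X2: "cnj X = X"
  proof -
    have "cnj X = (\<Sum>a<n. \<Sum>b<n. complex_of_real (S a b) * v $ a * cnj (v $ b))"
      unfolding X_def by simp
    also have "\<dots> = (\<Sum>b<n. \<Sum>a<n. complex_of_real (S a b) * v $ a * cnj (v $ b))"
      by (rule sum.swap)
    also have "\<dots> = X" unfolding X_def
      by (auto simp: sym mult_ac intro!: sum.cong)
    finally show ?thesis .
  qed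
  have "cnj z * complex_of_real r = z * complex_of_real r" using X1 X2 by (metis complex_cnj_complex_of_real complex_cnj_mult)
  hence "cnj z = z" using rpos by simp
  hence imz: "Im z = 0" by (simp add: complex_eq_iff)
  have eqR: "(\<Sum>b<n. S a b * Re (v $ b)) = Re z * Re (v $ a)"
       "(\<Sum>b<n. S a b * Im (v $ b)) = Re z * Im (v $ a)" if "a < n" for a
  proof -
    have "Re (\<Sum>b<n. complex_of_real (S a b) * v $ b) = Re (z * v $ a)" using eq[OF that] by simp
    thus "(\<Sum>b<n. S a b * Re (v $ b)) = Re z * Re (v $ a)" using imz by (simp add: Re_sum)
    have "Im (\<Sum>b<n. complex_of_real (S a b) * v $ b) = Im (z * v $ a)" using eq[OF that] by simp
    thus "(\<Sum>b<n. S a b * Im (v $ b)) = Re z * Im (v $ a)" using imz by (simp add: Im_sum)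
  qed
  show ?thesis
  proof (cases "Re (v $ a0) = 0")
    case True
    hence "Im (v $ a0) \<noteq> 0" using a0(2) by (simp add: complex_eq_iff)
    thus ?thesis using eqR(2) a0(1) by (intro exI[of _ "Re z"] exI[of _ "\<lambda>b. Im (v $ b)"]) auto
  next
    case False
    thus ?thesis using eqR(1) a0(1) by (intro exI[of _ "Re z"] exI[of _ "\<lambda>b. Re (v $ b)"]) auto
  qed
qed

definition orthn :: "nat \<Rightarrow> nat \<Rightarrow> (nat \<Rightarrow> nat \<Rightarrow> real) \<Rightarrow> bool" where
  "orthn n m q \<longleftrightarrow> (\<forall>i<m. \<forall>j<m. (\<Sum>a<n. q i a * q j a) = (if i = j then 1 else 0))"

lemma ext1:
  fixes q :: "nat \<Rightarrow> nat \<Rightarrow> real" and m n :: nat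
  assumes "m < n"
  shows "\<exists>u. (\<forall>i<m. (\<Sum>a<n. q i a * u a) = 0) \<and> (\<Sum>a<n. u a * u a) = 1"
proof -
  obtain x where x: "\<exists>a<n. x a \<noteq> 0" "\<forall>i<m. (\<Sum>a<n. q i a * x a) = 0"
    using kernel_nontriv[of m n q] assms by auto
  define c where "c = (\<Sum>a<n. x a * x a)"
  have cpos: "c > 0" unfolding c_def using x(1)
    by (metis (no_types, lifting) lessThan_iff finite_lessThan not_real_square_gt_zero sum_pos2 zero_le_square)
  define u where "u a = x a / sqrt c" for a
  have "(\<Sum>a<n. q i a * u a) = 0" if "i < m" for i
  proof -
    have "(\<Sum>a<n. q i a * u a) = (\<Sum>a<n. q i a * x a) / sqrt c"
      unfolding u_def by (simp add: sum_divide_distrib)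
    thus ?thesis using x(2) that by simp
  qed
  moreover have "(\<Sum>a<n. u a * u a) = 1"
  proof -
    have "(\<Sum>a<n. u a * u a) = c / (sqrt c * sqrt c)"
      unfolding u_def c_def by (simp add: sum_divide_distrib)
    thus ?thesis using cpos by simp
  qed
  ultimately show ?thesis by blast
qed

lemma extend_orth:
  assumes "orthn n m q" "m \<le> n"
  shows "\<exists>q'. (\<forall>i<m. q' i = q i) \<and> orthn n n q'"
  using assms
proof (induction "n - m" arbitrary: m q)
  case 0
  thus ?case by (intro exI[of _ q]) auto
next
  case (Suc d)
  hence mn: "m < n" by auto
  obtain u where u: "\<forall>i<m. (\<Sum>a<n. q i a * u a) = 0" "(\<Sum>a<n. u a * u a) = 1"
    using ext1[OF mn] by blast
  define q1 where "q1 = q(m := u)"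
  have "orthn n (Suc m) q1"
    unfolding orthn_def
  proof (intro allI impI)
    fix i j assume ij: "i < Suc m" "j < Suc m"
    show "(\<Sum>a<n. q1 i a * q1 j a) = (if i = j then 1 else 0)"
    proof (cases "i = m")
      case True
      show ?thesis
      proof (cases "j = m")
        case True
        thus ?thesis using \<open>i = m\<close> u(2) by (simp add: q1_def)
      next
        case False
        hence "j < m" using ij by auto
        thus ?thesis using True u(1) False by (simp add: q1_def mult.commute)
      qed
    next
      case False
      hence im: "i < m" using ij by auto
      show ?thesis
      proof (cases "j = m")
        case True
        thus ?thesis using im u(1) by (simp add: q1_def)
      next
        case False
        hence "j < m" using ij by auto
        thus ?thesis using im Suc.prems(1) \<open>i \<noteq> m\<close> False unfolding orthn_def q1_def by simp
      qed
    qed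
  qed
  moreover have "d = n - Suc m" using Suc.hyps(2) by simp
  ultimately obtain q' where "\<forall>i<Suc m. q' i = q1 i" "orthn n n q'" using Suc.hyps(1)[of "Suc m" q1] mn by auto
  thus ?case by (intro exI[of _ q'], auto simp: q1_def)
qed

lemma parseval:
  assumes "orthn n n q" "a < n" "b < n"
  shows "(\<Sum>i<n. q i a * q i b) = (if a = b then 1 else 0)"
proof -
  define Q where "Q = mat n n (\<lambda>(a,i). q i a)"
  have Q: "Q \<in> carrier_mat n n" "transpose_mat Q \<in> carrier_mat n n" unfolding Q_def by auto
  have "transpose_mat Q * Q = 1\<^sub>m n"
    using assms(1) unfolding orthn_def Q_def
    by (intro eq_matI, auto simp: scalar_prod_def lessThan_atLeast0 row_def col_def intro!: sum.cong)
  hence "Q * transpose_mat Q = 1\<^sub>m n" using mat_mult_left_right_inverse[OF Q(2) Q(1)] by auto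
  hence "(Q * transpose_mat Q) $$ (a,b) = (if a = b then 1 else 0)" using assms by auto
  moreover have "(Q * transpose_mat Q) $$ (a,b) = (\<Sum>i<n. q i a * q i b)"
    using assms unfolding Q_def by (auto simp: scalar_prod_def lessThan_atLeast0 intro!: sum.cong)
  ultimately show ?thesis by simp
qed

lemma expand:
  assumes "orthn n n q" "a < n"
  shows "x a = (\<Sum>i<n. (\<Sum>b<n. q i b * x b) * q i a)"
proof -
  have "(\<Sum>i<n. (\<Sum>b<n. q i b * x b) * q i a) = (\<Sum>b<n. x b * (\<Sum>i<n. q i b * q i a))"
  proof -
    have "(\<Sum>i<n. (\<Sum>b<n. q i b * x b) * q i a) = (\<Sum>i<n. \<Sum>b<n. x b * (q i b * q i a))"
      by (rule sum.cong, simp, simp add: sum_distrib_right sum_distrib_left mult_ac)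
    also have "\<dots> = (\<Sum>b<n. \<Sum>i<n. x b * (q i b * q i a))" by (rule sum.swap)
    also have "\<dots> = (\<Sum>b<n. x b * (\<Sum>i<n. q i b * q i a))" by (simp add: sum_distrib_left)
    finally show ?thesis .
  qed
  also have "\<dots> = (\<Sum>b<n. x b * (if b = a then 1 else 0))"
    using parseval[OF assms(1) _ assms(2)] by (auto intro!: sum.cong)
  also have "\<dots> = (\<Sum>b<n. if b = a then x b else 0)" by (rule sum.cong) auto
  also have "\<dots> = x a" using assms(2) by simp
  finally show ?thesis by simp
qed

lemma sum_mult_swap:
  "(\<Sum>a\<in>A. f a * (\<Sum>c\<in>C. g a c)) = (\<Sum>c\<in>C. \<Sum>a\<in>A. f a * (g a c :: real))"
  by (simp add: sum_distrib_left sum.swap[of _ A C])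

lemma normalize_vec:
  fixes z :: "nat \<Rightarrow> real"
  assumes "\<exists>a<n. z a \<noteq> 0"
  shows "\<exists>c>0. (\<Sum>a<n. (z a / c) * (z a / c)) = 1"
proof -
  define s where "s = (\<Sum>a<n. z a * z a)"
  have spos: "s > 0" unfolding s_def using assms
    by (metis (no_types, lifting) lessThan_iff finite_lessThan not_real_square_gt_zero sum_pos2 zero_le_square)
  have "(\<Sum>a<n. (z a / sqrt s) * (z a / sqrt s)) = s / (sqrt s * sqrt s)"
    unfolding s_def by (simp add: sum_divide_distrib)
  also have "\<dots> = 1" using spos by simp
  finally show ?thesis using spos by (intro exI[of _ "sqrt s"]) auto
qed

lemma eig_ext:
  fixes S q :: "nat \<Rightarrow> nat \<Rightarrow> real" and l :: "nat \<Rightarrow> real"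
  assumes sym: "\<And>a b. a < n \<Longrightarrow> b < n \<Longrightarrow> S a b = S b a"
   and orth: "orthn n m q" and mn: "m < n"
   and eig: "\<And>i a. i < m \<Longrightarrow> a < n \<Longrightarrow> (\<Sum>b<n. S a b * q i b) = l i * q i a"
  shows "\<exists>u \<mu>. (\<forall>i<m. (\<Sum>a<n. q i a * u a) = 0) \<and> (\<Sum>a<n. u a * u a) = 1
          \<and> (\<forall>a<n. (\<Sum>b<n. S a b * u b) = \<mu> * u a)"
proof -
  obtain q' where q'q: "\<forall>i<m. q' i = q i" and q': "orthn n n q'"
    using extend_orth[OF orth] mn by auto
  define r where "r = n - m"
  have r: "0 < r" using mn unfolding r_def by auto
  define S' where "S' c d = (\<Sum>a<n. \<Sum>b<n. q' (m+c) a * S a b * q' (m+d) b)" for c d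
  have S'sym: "S' c d = S' d c" if "c < r" "d < r" for c d
  proof -
    have "S' c d = (\<Sum>b<n. \<Sum>a<n. q' (m+c) a * S a b * q' (m+d) b)"
      unfolding S'_def by (rule sum.swap)
    also have "\<dots> = S' d c" unfolding S'_def by (auto simp: sym mult_ac intro!: sum.cong)
    finally show ?thesis .
  qed
  obtain \<mu> y where y: "\<exists>c<r. y c \<noteq> 0" "\<forall>c<r. (\<Sum>d<r. S' c d * y d) = \<mu> * y c"
    using real_eigvec[OF r, of S'] S'sym by blast
  define z where "z a = (\<Sum>c<r. y c * q' (m+c) a)" for a
  define w where "w a = (\<Sum>b<n. S a b * z b)" for a
  define cz where "cz i = (\<Sum>a<n. q' i a * z a)" for i
  define cw where "cw i = (\<Sum>a<n. q' i a * w a)" for i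
  have cz: "cz i = (if m \<le> i then y (i - m) else 0)" if "i < n" for i
  proof -
    have "cz i = (\<Sum>c<r. \<Sum>a<n. q' i a * (y c * q' (m+c) a))"
      unfolding cz_def z_def by (rule sum_mult_swap)
    also have "\<dots> = (\<Sum>c<r. y c * (\<Sum>a<n. q' i a * q' (m+c) a))"
      by (simp add: sum_distrib_left mult_ac)
    also have "\<dots> = (\<Sum>c<r. y c * (if i = m + c then 1 else 0))"
      using q' that unfolding orthn_def r_def by (auto intro!: sum.cong)
    also have "\<dots> = (\<Sum>c<r. if c = i - m \<and> m \<le> i then y c else 0)"
      by (rule sum.cong, auto)
    also have "\<dots> = (if m \<le> i then y (i - m) else 0)"
      using that unfolding r_def by (cases "m \<le> i") auto
    finally show ?thesis .
  qed
  have cw: "cw i = \<mu> * cz i" if "i < n" for i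
  proof (cases "m \<le> i")
    case False
    hence im: "i < m" by auto
    have "cw i = (\<Sum>b<n. \<Sum>a<n. q' i a * (S a b * z b))"
      unfolding cw_def w_def by (rule sum_mult_swap)
    also have "\<dots> = (\<Sum>b<n. z b * (\<Sum>a<n. S b a * q i a))"
      using q'q im by (auto simp: sum_distrib_left sym mult_ac intro!: sum.cong)
    also have "\<dots> = (\<Sum>b<n. z b * (l i * q i b))"
      using eig im by (auto intro!: sum.cong)
    also have "\<dots> = l i * cz i" unfolding cz_def using q'q im
      by (simp add: sum_distrib_left mult_ac)
    also have "\<dots> = 0" using cz[OF that] False by simp
    finally show ?thesis using cz[OF that] False by simp
  next
    case True
    define c' where "c' = i - m"
    have i: "i = m + c'" "c' < r" using True that unfolding c'_def r_def by auto
    have "cw i = (\<Sum>a<n. \<Sum>b<n. \<Sum>d<r. q' i a * (S a b * (y d * q' (m+d) b)))"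
      unfolding cw_def w_def z_def by (simp add: sum_distrib_left)
    also have "\<dots> = (\<Sum>d<r. \<Sum>a<n. \<Sum>b<n. q' i a * (S a b * (y d * q' (m+d) b)))"
    proof -
      have "(\<Sum>a<n. \<Sum>b<n. \<Sum>d<r. q' i a * (S a b * (y d * q' (m+d) b)))
          = (\<Sum>a<n. \<Sum>d<r. \<Sum>b<n. q' i a * (S a b * (y d * q' (m+d) b)))"
        by (rule sum.cong, simp, rule sum.swap)
      also have "\<dots> = (\<Sum>d<r. \<Sum>a<n. \<Sum>b<n. q' i a * (S a b * (y d * q' (m+d) b)))"
        by (rule sum.swap)
      finally show ?thesis .
    qed
    also have "\<dots> = (\<Sum>d<r. S' c' d * y d)"
      unfolding S'_def i(1) by (simp add: sum_distrib_right sum_distrib_left mult_ac)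
    also have "\<dots> = \<mu> * y c'" using y(2) i(2) by auto
    also have "\<dots> = \<mu> * cz i" using cz[OF that] True c'_def by simp
    finally show ?thesis .
  qed
  have wz: "w a = \<mu> * z a" if "a < n" for a
  proof -
    have "w a = (\<Sum>i<n. cw i * q' i a)" unfolding cw_def by (rule expand[OF q' that])
    also have "\<dots> = \<mu> * (\<Sum>i<n. cz i * q' i a)"
      by (simp add: cw sum_distrib_left mult_ac)
    also have "(\<Sum>i<n. cz i * q' i a) = z a" unfolding cz_def by (rule expand[OF q' that, symmetric])
    finally show ?thesis by simp
  qed
  obtain c0 where c0: "c0 < r" "y c0 \<noteq> 0" using y(1) by auto
  have "cz (m + c0) \<noteq> 0" using cz[of "m+c0"] c0 unfolding r_def by auto
  hence "\<exists>a<n. z a \<noteq> 0" unfolding cz_def by (metis (no_types, lifting) mult_zero_right lessThan_iff sum.neutral)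
  then obtain c where c: "c > 0" "(\<Sum>a<n. (z a / c) * (z a / c)) = 1" using normalize_vec by blast
  define u where "u a = z a / c" for a
  have "(\<Sum>a<n. q i a * u a) = 0" if "i < m" for i
  proof -
    have "(\<Sum>a<n. q i a * u a) = cz i / c" unfolding u_def cz_def using q'q that
      by (simp add: sum_divide_distrib)
    thus ?thesis using cz[of i] that mn by simp
  qed
  moreover have "(\<Sum>b<n. S a b * u b) = \<mu> * u a" if "a < n" for a
  proof -
    have "(\<Sum>b<n. S a b * u b) = w a / c" unfolding u_def w_def by (simp add: sum_divide_distrib)
    thus ?thesis using wz[OF that] unfolding u_def by simp
  qed
  ultimately show ?thesis using c(2) unfolding u_def by (intro exI[of _ u] exI[of _ \<mu>]) (auto simp: u_def)
qed

lemma orthn_snoc: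
  assumes "orthn n m q" "\<forall>i<m. (\<Sum>a<n. q i a * u a) = 0" "(\<Sum>a<n. u a * u a) = 1"
  shows "orthn n (Suc m) (q(m := u))"
  unfolding orthn_def
proof (intro allI impI)
  fix i j assume ij: "i < Suc m" "j < Suc m"
  show "(\<Sum>a<n. (q(m := u)) i a * (q(m := u)) j a) = (if i = j then 1 else 0)"
  proof (cases "i = m")
    case True
    show ?thesis
    proof (cases "j = m")
      case True
      thus ?thesis using \<open>i = m\<close> assms(3) by simp
    next
      case False
      hence "j < m" using ij by auto
      thus ?thesis using True assms(2) False by (simp add: mult.commute)
    qed
  next
    case False
    hence im: "i < m" using ij by auto
    show ?thesis
    proof (cases "j = m")
      case True
      thus ?thesis using im assms(2) by simp
    next
      case False
      hence "j < m" using ij by auto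
      thus ?thesis using im assms(1) \<open>i \<noteq> m\<close> False unfolding orthn_def by simp
    qed
  qed
qed

lemma spectral:
  fixes S :: "nat \<Rightarrow> nat \<Rightarrow> real"
  assumes sym: "\<And>a b. a < n \<Longrightarrow> b < n \<Longrightarrow> S a b = S b a"
  shows "\<exists>q l. orthn n n q \<and> (\<forall>i<n. \<forall>a<n. (\<Sum>b<n. S a b * q i b) = l i * q i a)"
proof -
  have "m \<le> n \<Longrightarrow> \<exists>q l. orthn n m q \<and> (\<forall>i<m. \<forall>a<n. (\<Sum>b<n. S a b * q i b) = l i * q i a)" for m
  proof (induction m)
    case 0
    thus ?case by (auto simp: orthn_def)
  next
    case (Suc m)
    then obtain q l where ql: "orthn n m q" "\<forall>i<m. \<forall>a<n. (\<Sum>b<n. S a b * q i b) = l i * q i a"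
      by auto
    obtain u \<mu> where u: "\<forall>i<m. (\<Sum>a<n. q i a * u a) = 0" "(\<Sum>a<n. u a * u a) = 1"
       "\<forall>a<n. (\<Sum>b<n. S a b * u b) = \<mu> * u a"
      using eig_ext[where S=S and n=n and m=m and q=q and l=l] sym ql Suc.prems by auto
    show ?case
      by (intro exI[of _ "q(m := u)"] exI[of _ "l(m := \<mu>)"] conjI orthn_snoc[OF ql(1) u(1,2)])
         (use ql(2) u(3) in \<open>auto simp: less_Suc_eq\<close>)
  qed
  thus ?thesis by auto
qed

lemma char_poly_spectral:
  fixes S q :: "nat \<Rightarrow> nat \<Rightarrow> real"
  assumes q: "orthn n n q" and eig: "\<forall>i<n. \<forall>a<n. (\<Sum>b<n. S a b * q i b) = l i * q i a"
  shows "char_poly (mat n n (\<lambda>(a,b). S a b)) = (\<Prod>i\<leftarrow>[0..<n]. [:- l i, 1:])"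
proof -
  define Q where "Q = mat n n (\<lambda>(a,i). q i a)"
  define D where "D = mat n n (\<lambda>(i,j). if i = j then l i else 0)"
  have Q: "Q \<in> carrier_mat n n" "transpose_mat Q \<in> carrier_mat n n" unfolding Q_def by auto
  have D: "D \<in> carrier_mat n n" unfolding D_def by auto
  have QtQ: "transpose_mat Q * Q = 1\<^sub>m n"
    using q unfolding orthn_def Q_def
    by (intro eq_matI, auto simp: scalar_prod_def lessThan_atLeast0 row_def col_def intro!: sum.cong)
  hence QQt: "Q * transpose_mat Q = 1\<^sub>m n" using mat_mult_left_right_inverse[OF Q(2) Q(1)] by auto
  have QD: "Q * D = mat n n (\<lambda>(a,i). q i a * l i)"
  proof (rule eq_matI)
    fix a i assume ai: "a < dim_row (mat n n (\<lambda>(a,i). q i a * l i))" "i < dim_col (mat n n (\<lambda>(a,i). q i a * l i))"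
    have "(Q * D) $$ (a, i) = (\<Sum>j<n. q j a * (if j = i then l j else 0))"
      using ai Q D unfolding Q_def D_def by (auto simp: scalar_prod_def lessThan_atLeast0 intro!: sum.cong)
    also have "\<dots> = (\<Sum>j<n. if j = i then q j a * l j else 0)" by (rule sum.cong) auto
    also have "\<dots> = q i a * l i" using ai by simp
    finally show "(Q * D) $$ (a, i) = mat n n (\<lambda>(a,i). q i a * l i) $$ (a, i)" using ai by simp
  qed (insert Q D, auto)
  have A: "mat n n (\<lambda>(a,b). S a b) = Q * D * transpose_mat Q"
  proof (rule eq_matI)
    fix a b assume ab: "a < dim_row (Q * D * transpose_mat Q)" "b < dim_col (Q * D * transpose_mat Q)"
    hence ab': "a < n" "b < n" using Q D by auto
    have "(Q * D * transpose_mat Q) $$ (a, b) = (\<Sum>i<n. q i a * l i * q i b)"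
      unfolding QD using ab' unfolding Q_def by (auto simp: scalar_prod_def lessThan_atLeast0 intro!: sum.cong)
    also have "\<dots> = (\<Sum>i<n. (\<Sum>c<n. q i c * S a c) * q i b)"
      using eig ab' by (auto simp: mult.commute intro!: sum.cong)
    also have "\<dots> = S a b" by (rule expand[OF q ab'(2), symmetric])
    finally show "mat n n (\<lambda>(a,b). S a b) $$ (a, b) = (Q * D * transpose_mat Q) $$ (a, b)"
      using ab' by simp
  qed (insert Q D, auto)
  have "similar_mat (mat n n (\<lambda>(a,b). S a b)) D"
    unfolding similar_mat_def similar_mat_wit_def
    by (rule exI[of _ Q], rule exI[of _ "transpose_mat Q"], insert Q D QQt QtQ A, auto simp: Let_def)
  hence "char_poly (mat n n (\<lambda>(a,b). S a b)) = char_poly D" by (rule char_poly_similar)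
  also have "\<dots> = (\<Prod>a\<leftarrow>diag_mat D. [:- a, 1:])"
    by (rule char_poly_upper_triangular[OF D], auto simp: upper_triangular_def D_def)
  also have "\<dots> = (\<Prod>i\<leftarrow>[0..<n]. [:- l i, 1:])"
    unfolding diag_mat_def D_def by (simp, rule arg_cong[where f = prod_list], rule map_cong, auto)
  finally show ?thesis .
qed



lemma poly4_b1:
  fixes b1 b2 b3 b4 :: real
  assumes "\<And>t. 0 \<le> b1 * t + b2 * t^2 + b3 * t^3 + b4 * t^4"
  shows "b1 = 0"
proof (rule ccontr)
  assume nz: "b1 \<noteq> 0"
  define B where "B = \<bar>b2\<bar> + \<bar>b3\<bar> + \<bar>b4\<bar> + 1"
  have Bpos: "B > 0" unfolding B_def by auto
  define \<tau> where "\<tau> = min 1 (\<bar>b1\<bar> / (2 * B))"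
  have tau: "0 < \<tau>" "\<tau> \<le> 1" "\<tau> * B \<le> \<bar>b1\<bar> / 2"
    using nz Bpos unfolding \<tau>_def by (auto simp: min_def field_simps)
  define t where "t = - sgn b1 * \<tau>"
  have abst: "\<bar>t\<bar> = \<tau>" using nz tau unfolding t_def by (cases "b1 > 0") (auto simp: sgn_if)
  have b1t: "b1 * t = - \<bar>b1\<bar> * \<tau>" unfolding t_def using nz
    by (cases "b1 > 0") (auto simp: sgn_if)
  have e2: "\<bar>b2 * t^2\<bar> = \<bar>b2\<bar> * \<tau>^2" using abst by (simp add: abs_mult power_abs)
  have e3: "\<bar>b3 * t^3\<bar> = \<bar>b3\<bar> * \<tau>^3" using abst by (simp add: abs_mult power_abs)
  have e4: "\<bar>b4 * t^4\<bar> = \<bar>b4\<bar> * \<tau>^4" using abst by (simp add: abs_mult power_abs)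
  have p3: "\<tau>^3 \<le> \<tau>^2" "\<tau>^4 \<le> \<tau>^2" using tau by (auto intro!: power_decreasing)
  have m3: "\<bar>b3\<bar> * \<tau>^3 \<le> \<bar>b3\<bar> * \<tau>^2" using p3(1) by (intro mult_left_mono) auto
  have m4: "\<bar>b4\<bar> * \<tau>^4 \<le> \<bar>b4\<bar> * \<tau>^2" using p3(2) by (intro mult_left_mono) auto
  have "b2 * t^2 + b3 * t^3 + b4 * t^4 \<le> \<bar>b2\<bar> * \<tau>^2 + \<bar>b3\<bar> * \<tau>^2 + \<bar>b4\<bar> * \<tau>^2"
    using e2 e3 e4 m3 m4 abs_ge_self[of "b2 * t^2"] abs_ge_self[of "b3 * t^3"] abs_ge_self[of "b4 * t^4"]
    by linarith
  also have "\<dots> \<le> \<tau> * (\<tau> * B)" unfolding B_def using tau by (simp add: power2_eq_square algebra_simps)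
  also have "\<dots> \<le> \<tau> * (\<bar>b1\<bar> / 2)" using tau by (intro mult_left_mono) auto
  finally have "b1 * t + b2 * t^2 + b3 * t^3 + b4 * t^4 \<le> - \<bar>b1\<bar> * \<tau> + \<tau> * (\<bar>b1\<bar> / 2)"
    using b1t by linarith
  also have "\<dots> < 0" using tau nz by (simp add: algebra_simps)
  finally show False using assms[of t] by linarith
qed

lemma poly4_b2:
  fixes b2 b3 b4 :: real
  assumes "\<And>t. 0 \<le> b2 * t^2 + b3 * t^3 + b4 * t^4"
  shows "b2 \<ge> 0"
proof (rule ccontr)
  assume neg: "\<not> b2 \<ge> 0"
  define B where "B = \<bar>b3\<bar> + \<bar>b4\<bar> + 1"
  have Bpos: "B > 0" unfolding B_def by auto
  define \<tau> where "\<tau> = min 1 (\<bar>b2\<bar> / (2 * B))"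
  have tau: "0 < \<tau>" "\<tau> \<le> 1" "\<tau> * B \<le> \<bar>b2\<bar> / 2"
    using neg Bpos unfolding \<tau>_def by (auto simp: min_def field_simps)
  have p4: "\<tau>^4 \<le> \<tau>^3" using tau by (auto intro!: power_decreasing)
  have m3: "b3 * \<tau>^3 \<le> \<bar>b3\<bar> * \<tau>^3" using tau by (intro mult_right_mono) auto
  have m4: "b4 * \<tau>^4 \<le> \<bar>b4\<bar> * \<tau>^4" using tau by (intro mult_right_mono) auto
  have m4': "\<bar>b4\<bar> * \<tau>^4 \<le> \<bar>b4\<bar> * \<tau>^3" using p4 by (intro mult_left_mono) auto
  have "b3 * \<tau>^3 + b4 * \<tau>^4 \<le> \<bar>b3\<bar> * \<tau>^3 + \<bar>b4\<bar> * \<tau>^3" using m3 m4 m4' by linarith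
  also have "\<dots> \<le> \<tau>^2 * (\<tau> * B)" unfolding B_def using tau
    by (simp add: power3_eq_cube power2_eq_square algebra_simps)
  also have "\<dots> \<le> \<tau>^2 * (\<bar>b2\<bar> / 2)" using tau by (intro mult_left_mono) auto
  finally have "b2 * \<tau>^2 + b3 * \<tau>^3 + b4 * \<tau>^4 \<le> b2 * \<tau>^2 + \<tau>^2 * (\<bar>b2\<bar> / 2)" by linarith
  also have "\<dots> = (b2 + \<bar>b2\<bar> / 2) * \<tau>^2" by (simp add: algebra_simps)
  also have "\<dots> < 0" using tau neg by (intro mult_neg_pos) auto
  finally show False using assms[of \<tau>] by linarith
qed

lemma poly4:
  fixes b1 b2 b3 b4 :: real
  assumes "\<And>t. 0 \<le> b1 * t + b2 * t^2 + b3 * t^3 + b4 * t^4"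
  shows "b1 = 0" "b2 \<ge> 0"
proof -
  show b1: "b1 = 0" by (rule poly4_b1[OF assms])
  show "b2 \<ge> 0" by (rule poly4_b2[of b2 b3 b4], insert assms b1, auto)
qed



definition Mf :: "nat \<Rightarrow> (nat \<Rightarrow> nat \<Rightarrow> real) \<Rightarrow> nat \<Rightarrow> nat \<Rightarrow> real" where
  "Mf N A x y = (\<Sum>b<N. A b x * A b y)"
definition Kf :: "nat \<Rightarrow> (nat \<Rightarrow> nat \<Rightarrow> real) \<Rightarrow> nat \<Rightarrow> nat \<Rightarrow> real" where
  "Kf k g x y = (\<Sum>j<k. g x j * g y j)"
definition Cf :: "nat \<Rightarrow> (nat \<Rightarrow> nat \<Rightarrow> real) \<Rightarrow> (nat \<Rightarrow> nat \<Rightarrow> real) \<Rightarrow> nat \<Rightarrow> nat \<Rightarrow> real" where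
  "Cf k g e x y = (\<Sum>j<k. e x j * g y j + g x j * e y j)"
definition Phi :: "nat \<Rightarrow> nat \<Rightarrow> nat \<Rightarrow> (nat \<Rightarrow> nat \<Rightarrow> real) \<Rightarrow> (nat \<Rightarrow> nat \<Rightarrow> real) \<Rightarrow> real" where
  "Phi N L k A g = (\<Sum>x<L. \<Sum>y<L. (Mf N A x y - Kf k g x y)^2)"

lemma Kf_pert: "Kf k (\<lambda>x j. g x j + t * e x j) x y = Kf k g x y + t * Cf k g e x y + t^2 * Kf k e x y"
  unfolding Kf_def Cf_def
  by (simp add: sum.distrib sum_distrib_left algebra_simps power2_eq_square)

lemma Phi_pert:
  fixes N L k :: nat and A g e :: "nat \<Rightarrow> nat \<Rightarrow> real" and t :: real
  defines "R \<equiv> \<lambda>x y. Mf N A x y - Kf k g x y"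
  shows "Phi N L k A (\<lambda>x j. g x j + t * e x j) - Phi N L k A g =
    (-2 * (\<Sum>x<L. \<Sum>y<L. R x y * Cf k g e x y)) * t
    + (\<Sum>x<L. \<Sum>y<L. (Cf k g e x y)^2 - 2 * R x y * Kf k e x y) * t^2
    + (2 * (\<Sum>x<L. \<Sum>y<L. Cf k g e x y * Kf k e x y)) * t^3
    + (\<Sum>x<L. \<Sum>y<L. (Kf k e x y)^2) * t^4"
proof -
  have ent: "(Mf N A x y - Kf k (\<lambda>x j. g x j + t * e x j) x y)^2 - (Mf N A x y - Kf k g x y)^2
     = (-2 * (R x y * Cf k g e x y)) * t + ((Cf k g e x y)^2 - 2 * R x y * Kf k e x y) * t^2
       + (2 * (Cf k g e x y * Kf k e x y)) * t^3 + (Kf k e x y)^2 * t^4" for x y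
    unfolding Kf_pert R_def by (simp add: power2_eq_square power3_eq_cube power4_eq_xxxx algebra_simps)
  have "Phi N L k A (\<lambda>x j. g x j + t * e x j) - Phi N L k A g =
     (\<Sum>x<L. \<Sum>y<L. (Mf N A x y - Kf k (\<lambda>x j. g x j + t * e x j) x y)^2 - (Mf N A x y - Kf k g x y)^2)"
    unfolding Phi_def by (simp add: sum_subtractf)
  also have "\<dots> = (\<Sum>x<L. \<Sum>y<L. (-2 * (R x y * Cf k g e x y)) * t + ((Cf k g e x y)^2 - 2 * R x y * Kf k e x y) * t^2
       + (2 * (Cf k g e x y * Kf k e x y)) * t^3 + (Kf k e x y)^2 * t^4)"
    by (simp only: ent)
  also have "\<dots> = (-2 * (\<Sum>x<L. \<Sum>y<L. R x y * Cf k g e x y)) * t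
    + (\<Sum>x<L. \<Sum>y<L. (Cf k g e x y)^2 - 2 * R x y * Kf k e x y) * t^2
    + (2 * (\<Sum>x<L. \<Sum>y<L. Cf k g e x y * Kf k e x y)) * t^3
    + (\<Sum>x<L. \<Sum>y<L. (Kf k e x y)^2) * t^4"
    by (simp add: sum.distrib sum_subtractf sum_negf sum_distrib_left sum_distrib_right left_diff_distrib)
  finally show ?thesis .
qed

lemma Mf_sym: "Mf N A x y = Mf N A y x" unfolding Mf_def by (simp add: mult.commute)
lemma Kf_sym: "Kf k g x y = Kf k g y x" unfolding Kf_def by (simp add: mult.commute)

lemma gram_bil:
  fixes F :: "'b \<Rightarrow> 'a \<Rightarrow> real"
  shows "(\<Sum>x\<in>X. u x * (\<Sum>y\<in>Y. (\<Sum>b\<in>B. F b x * F b y) * w y))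
       = (\<Sum>b\<in>B. (\<Sum>x\<in>X. F b x * u x) * (\<Sum>y\<in>Y. F b y * w y))"
proof -
  have "(\<Sum>x\<in>X. u x * (\<Sum>y\<in>Y. (\<Sum>b\<in>B. F b x * F b y) * w y))
      = (\<Sum>x\<in>X. \<Sum>y\<in>Y. \<Sum>b\<in>B. (F b x * u x) * (F b y * w y))"
    by (simp add: sum_distrib_left sum_distrib_right mult_ac)
  also have "\<dots> = (\<Sum>x\<in>X. \<Sum>b\<in>B. \<Sum>y\<in>Y. (F b x * u x) * (F b y * w y))"
    by (rule sum.cong, simp, rule sum.swap)
  also have "\<dots> = (\<Sum>b\<in>B. \<Sum>x\<in>X. \<Sum>y\<in>Y. (F b x * u x) * (F b y * w y))"
    by (rule sum.swap)
  also have "\<dots> = (\<Sum>b\<in>B. (\<Sum>x\<in>X. F b x * u x) * (\<Sum>y\<in>Y. F b y * w y))"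
    by (simp only: sum_product)
  finally show ?thesis .
qed

lemma quad_spec:
  fixes S q :: "nat \<Rightarrow> nat \<Rightarrow> real"
  assumes q: "orthn n n q" and eig: "\<forall>i<n. \<forall>a<n. (\<Sum>b<n. S a b * q i b) = l i * q i a"
  shows "(\<Sum>a<n. v a * (\<Sum>b<n. S a b * v b)) = (\<Sum>i<n. l i * (\<Sum>a<n. q i a * v a)^2)"
    and "(\<Sum>a<n. v a * v a) = (\<Sum>i<n. (\<Sum>a<n. q i a * v a)^2)"
proof -
  define c where "c i = (\<Sum>a<n. q i a * v a)" for i
  have vexp: "v b = (\<Sum>i<n. c i * q i b)" if "b < n" for b
    unfolding c_def by (rule expand[OF q that])
  have Sv: "(\<Sum>b<n. S a b * v b) = (\<Sum>i<n. c i * l i * q i a)" if "a < n" for a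
  proof -
    have "(\<Sum>b<n. S a b * v b) = (\<Sum>b<n. S a b * (\<Sum>i<n. c i * q i b))"
      using vexp by (auto intro!: sum.cong)
    also have "\<dots> = (\<Sum>i<n. \<Sum>b<n. S a b * (c i * q i b))" by (rule sum_mult_swap)
    also have "\<dots> = (\<Sum>i<n. c i * (\<Sum>b<n. S a b * q i b))"
      by (simp add: sum_distrib_left mult_ac)
    also have "\<dots> = (\<Sum>i<n. c i * l i * q i a)" using eig that by (auto intro!: sum.cong)
    finally show ?thesis .
  qed
  have "(\<Sum>a<n. v a * (\<Sum>b<n. S a b * v b)) = (\<Sum>a<n. v a * (\<Sum>i<n. c i * l i * q i a))"
    using Sv by (auto intro!: sum.cong)
  also have "\<dots> = (\<Sum>i<n. \<Sum>a<n. v a * (c i * l i * q i a))" by (rule sum_mult_swap)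
  also have "\<dots> = (\<Sum>i<n. l i * (c i)^2)"
    by (rule sum.cong, simp, simp add: c_def sum_distrib_left power2_eq_square mult_ac)
  finally show "(\<Sum>a<n. v a * (\<Sum>b<n. S a b * v b)) = (\<Sum>i<n. l i * (\<Sum>a<n. q i a * v a)^2)"
    unfolding c_def .
  have "(\<Sum>a<n. v a * v a) = (\<Sum>a<n. v a * (\<Sum>i<n. c i * q i a))"
    using vexp by (auto intro!: sum.cong)
  also have "\<dots> = (\<Sum>i<n. \<Sum>a<n. v a * (c i * q i a))" by (rule sum_mult_swap)
  also have "\<dots> = (\<Sum>i<n. (c i)^2)"
    by (rule sum.cong, simp, simp add: c_def sum_distrib_left power2_eq_square mult_ac)
  finally show "(\<Sum>a<n. v a * v a) = (\<Sum>i<n. (\<Sum>a<n. q i a * v a)^2)" unfolding c_def .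
qed

lemma tri:
  fixes B :: "'y \<Rightarrow> 'j \<Rightarrow> real"
  shows "(\<Sum>y\<in>Y. (\<Sum>i\<in>J. B y i * a i) * (\<Sum>j\<in>J. B y j * c j))
     = (\<Sum>i\<in>J. a i * (\<Sum>j\<in>J. (\<Sum>y\<in>Y. B y i * B y j) * c j))"
proof -
  have "(\<Sum>y\<in>Y. (\<Sum>i\<in>J. B y i * a i) * (\<Sum>j\<in>J. B y j * c j))
      = (\<Sum>y\<in>Y. \<Sum>i\<in>J. \<Sum>j\<in>J. a i * (B y i * B y j * c j))"
    by (simp add: sum_product mult_ac)
  also have "\<dots> = (\<Sum>i\<in>J. \<Sum>y\<in>Y. \<Sum>j\<in>J. a i * (B y i * B y j * c j))"
    by (rule sum.swap)
  also have "\<dots> = (\<Sum>i\<in>J. \<Sum>j\<in>J. \<Sum>y\<in>Y. a i * (B y i * B y j * c j))"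
    by (rule sum.cong, simp, rule sum.swap)
  also have "\<dots> = (\<Sum>i\<in>J. a i * (\<Sum>j\<in>J. (\<Sum>y\<in>Y. B y i * B y j) * c j))"
    by (simp add: sum_distrib_left sum_distrib_right mult_ac)
  finally show ?thesis .
qed

locale mini =
  fixes N L k :: nat and A g :: "nat \<Rightarrow> nat \<Rightarrow> real"
  assumes min: "\<And>g'. Phi N L k A g \<le> Phi N L k A g'"
begin

abbreviation R where "R x y \<equiv> Mf N A x y - Kf k g x y"

lemma R_sym: "R x y = R y x" using Mf_sym Kf_sym by metis

lemma second_order:
  fixes e :: "nat \<Rightarrow> nat \<Rightarrow> real"
  shows "(\<Sum>x<L. \<Sum>y<L. R x y * Cf k g e x y) = 0"
    and "0 \<le> (\<Sum>x<L. \<Sum>y<L. (Cf k g e x y)^2 - 2 * R x y * Kf k e x y)"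
proof -
  have "\<And>t. 0 \<le> (-2 * (\<Sum>x<L. \<Sum>y<L. R x y * Cf k g e x y)) * t
    + (\<Sum>x<L. \<Sum>y<L. (Cf k g e x y)^2 - 2 * R x y * Kf k e x y) * t^2
    + (2 * (\<Sum>x<L. \<Sum>y<L. Cf k g e x y * Kf k e x y)) * t^3
    + (\<Sum>x<L. \<Sum>y<L. (Kf k e x y)^2) * t^4"
    using min Phi_pert[where N=N and L=L and k=k and A=A and g=g and e=e] by (metis diff_ge_0_iff_ge)
  from poly4[OF this] show "(\<Sum>x<L. \<Sum>y<L. R x y * Cf k g e x y) = 0"
    and "0 \<le> (\<Sum>x<L. \<Sum>y<L. (Cf k g e x y)^2 - 2 * R x y * Kf k e x y)" by auto
qed

lemma first_order:
  assumes x0: "x0 < L" and j0: "j0 < k"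
  shows "(\<Sum>y<L. R x0 y * g y j0) = 0"
proof -
  define e where "e x j = (if x = x0 \<and> j = j0 then 1 else (0::real))" for x j
  have d1: "(\<Sum>j<k. e x j * g y j) = (if x = x0 then g y j0 else 0)" for x y
  proof -
    have "(\<Sum>j<k. e x j * g y j) = (\<Sum>j<k. if j = j0 then (if x = x0 then g y j else 0) else 0)"
      unfolding e_def by (rule sum.cong) auto
    also have "\<dots> = (if x = x0 then g y j0 else 0)" using j0 by simp
    finally show ?thesis .
  qed
  have d2: "(\<Sum>j<k. g x j * e y j) = (if y = x0 then g x j0 else 0)" for x y
    using d1[of y x] by (simp add: mult.commute)
  have Ce: "Cf k g e x y = (if x = x0 then g y j0 else 0) + (if y = x0 then g x j0 else 0)" for x y
    unfolding Cf_def sum.distrib d1 d2 ..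
  have s1: "(\<Sum>x<L. \<Sum>y<L. R x y * (if x = x0 then g y j0 else 0)) = (\<Sum>y<L. R x0 y * g y j0)"
  proof -
    have "(\<Sum>x<L. \<Sum>y<L. R x y * (if x = x0 then g y j0 else 0))
      = (\<Sum>x<L. if x = x0 then (\<Sum>y<L. R x y * g y j0) else 0)" by (rule sum.cong) auto
    also have "\<dots> = (\<Sum>y<L. R x0 y * g y j0)" using x0 by simp
    finally show ?thesis .
  qed
  have s2: "(\<Sum>x<L. \<Sum>y<L. R x y * (if y = x0 then g x j0 else 0)) = (\<Sum>y<L. R x0 y * g y j0)"
  proof -
    have "(\<Sum>x<L. \<Sum>y<L. R x y * (if y = x0 then g x j0 else 0))
      = (\<Sum>x<L. \<Sum>y<L. if y = x0 then R x y * g x j0 else 0)" by (intro sum.cong) auto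
    also have "\<dots> = (\<Sum>x<L. R x x0 * g x j0)" using x0 by simp
    also have "\<dots> = (\<Sum>y<L. R x0 y * g y j0)" using R_sym by simp
    finally show ?thesis .
  qed
  have "(\<Sum>x<L. \<Sum>y<L. R x y * Cf k g e x y) = 2 * (\<Sum>y<L. R x0 y * g y j0)"
    unfolding Ce distrib_left sum.distrib s1 s2 by simp
  thus ?thesis using second_order(1)[of e] by simp
qed

lemma eigR_F1:
  assumes r: "\<forall>x<L. (\<Sum>y<L. R x y * r y) = \<rho> * r x" and nz: "\<rho> \<noteq> 0" and j: "j < k"
  shows "(\<Sum>x<L. g x j * r x) = 0"
proof -
  have "\<rho> * (\<Sum>x<L. g x j * r x) = (\<Sum>x<L. g x j * (\<Sum>y<L. R x y * r y))"
    using r by (simp add: sum_distrib_left mult_ac)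
  also have "\<dots> = (\<Sum>y<L. \<Sum>x<L. g x j * (R x y * r y))" by (rule sum_mult_swap)
  also have "\<dots> = (\<Sum>y<L. r y * (\<Sum>x<L. R y x * g x j))"
    by (rule sum.cong, simp, simp add: sum_distrib_left R_sym mult_ac)
  also have "\<dots> = 0" using first_order j by simp
  finally show ?thesis using nz by simp
qed

lemma eigR_F2:
  assumes r: "\<forall>x<L. (\<Sum>y<L. R x y * r y) = \<rho> * r x" and nz: "\<rho> \<noteq> 0" and x: "x < L"
  shows "(\<Sum>y<L. Mf N A x y * r y) = \<rho> * r x"
proof -
  have "(\<Sum>y<L. Kf k g x y * r y) = (\<Sum>j<k. g x j * (\<Sum>y<L. g y j * r y))"
    unfolding Kf_def by (simp add: sum_distrib_left sum_distrib_right mult_ac sum.swap[of _ "{..<L}"])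
  also have "\<dots> = 0" using eigR_F1[OF r nz] by simp
  finally have "(\<Sum>y<L. Kf k g x y * r y) = 0" .
  moreover have "(\<Sum>y<L. Mf N A x y * r y) = (\<Sum>y<L. R x y * r y) + (\<Sum>y<L. Kf k g x y * r y)"
    by (simp add: sum.distrib[symmetric] algebra_simps)
  ultimately show ?thesis using r x by simp
qed

lemma eigR_F3:
  assumes r: "\<forall>x<L. (\<Sum>y<L. R x y * r y) = \<rho> * r x" and un: "(\<Sum>x<L. r x * r x) = 1"
  shows "\<rho> \<ge> 0"
proof (cases "\<rho> = 0")
  case False
  have "\<rho> = (\<Sum>x<L. r x * (\<rho> * r x))" using un by (simp add: sum_distrib_left[symmetric] mult_ac)
  also have "\<dots> = (\<Sum>x<L. r x * (\<Sum>y<L. Mf N A x y * r y))"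
    using eigR_F2[OF r False] by simp
  also have "\<dots> = (\<Sum>b<N. (\<Sum>x<L. A b x * r x) * (\<Sum>y<L. A b y * r y))"
    unfolding Mf_def by (rule gram_bil)
  also have "\<dots> \<ge> 0" by (intro sum_nonneg) auto
  finally show ?thesis .
qed simp

lemma dsum_prod: "(\<Sum>x\<in>X. \<Sum>y\<in>Y. f x * h y) = (\<Sum>x\<in>X. f x) * (\<Sum>y\<in>Y. (h y :: real))"
  by (simp add: sum_product)

lemma eigR_F4:
  assumes r: "\<forall>x<L. (\<Sum>y<L. R x y * r y) = \<rho> * r x" and un: "(\<Sum>x<L. r x * r x) = 1"
    and pos: "\<rho> > 0"
  shows "\<rho> * (\<Sum>j<k. c j * c j) \<le> (\<Sum>x<L. (\<Sum>j<k. g x j * c j)^2)"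
proof -
  define e where "e x j = r x * c j" for x j
  define u where "u x = (\<Sum>j<k. g x j * c j)" for x
  define cc where "cc = (\<Sum>j<k. c j * c j)"
  have C: "Cf k g e x y = r x * u y + u x * r y" for x y
    unfolding Cf_def e_def u_def by (simp add: sum.distrib sum_distrib_left mult_ac)
  have E: "Kf k e x y = (r x * r y) * cc" for x y
    unfolding Kf_def e_def cc_def by (simp add: sum_distrib_left mult_ac)
  have ru: "(\<Sum>x<L. r x * u x) = 0"
  proof -
    have "(\<Sum>x<L. r x * u x) = (\<Sum>j<k. \<Sum>x<L. r x * (g x j * c j))"
      unfolding u_def by (rule sum_mult_swap)
    also have "\<dots> = (\<Sum>j<k. c j * (\<Sum>x<L. g x j * r x))"
      by (simp add: sum_distrib_left mult_ac)
    also have "\<dots> = 0" using eigR_F1[OF r] pos by simp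
    finally show ?thesis .
  qed
  have "(\<Sum>x<L. \<Sum>y<L. (Cf k g e x y)^2)
      = (\<Sum>x<L. \<Sum>y<L. (r x * r x) * (u y * u y) + 2 * ((r x * u x) * (r y * u y)) + (u x * u x) * (r y * r y))"
    unfolding C by (simp add: power2_eq_square algebra_simps)
  also have "\<dots> = (\<Sum>x<L. r x * r x) * (\<Sum>y<L. u y * u y) + 2 * ((\<Sum>x<L. r x * u x) * (\<Sum>y<L. r y * u y))
        + (\<Sum>x<L. u x * u x) * (\<Sum>y<L. r y * r y)"
    by (simp only: sum.distrib sum_distrib_left[symmetric] sum_distrib_right[symmetric] dsum_prod)
  also have "\<dots> = 2 * (\<Sum>x<L. u x * u x)" using un ru by simp
  finally have C2: "(\<Sum>x<L. \<Sum>y<L. (Cf k g e x y)^2) = 2 * (\<Sum>x<L. u x * u x)" .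
  have "(\<Sum>x<L. \<Sum>y<L. 2 * R x y * Kf k e x y) = (\<Sum>x<L. \<Sum>y<L. (2 * cc) * (r x * (R x y * r y)))"
    unfolding E by (intro sum.cong refl) (simp add: mult_ac)
  also have "\<dots> = (2 * cc) * (\<Sum>x<L. r x * (\<Sum>y<L. R x y * r y))"
    by (simp only: sum_distrib_left[symmetric])
  also have "\<dots> = (2 * cc) * (\<Sum>x<L. \<rho> * (r x * r x))"
    using r by (intro arg_cong[where f = "\<lambda>z. (2 * cc) * z"] sum.cong) (auto simp: mult_ac)
  also have "\<dots> = 2 * cc * \<rho>" using un by (simp add: sum_distrib_left[symmetric])
  finally have RE: "(\<Sum>x<L. \<Sum>y<L. 2 * R x y * Kf k e x y) = 2 * cc * \<rho>" .
  have "0 \<le> (\<Sum>x<L. \<Sum>y<L. (Cf k g e x y)^2 - 2 * R x y * Kf k e x y)" by (rule second_order(2))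
  also have "\<dots> = 2 * (\<Sum>x<L. u x * u x) - 2 * cc * \<rho>"
    by (simp only: sum_subtractf C2 RE)
  finally show ?thesis unfolding cc_def u_def by (simp add: power2_eq_square mult_ac)
qed

lemma rho_le:
  assumes r: "\<forall>x<L. (\<Sum>y<L. R x y * r y) = \<rho> * r x" and un: "(\<Sum>x<L. r x * r x) = 1"
    and pos: "\<rho> > 0"
    and H: "\<And>w :: nat \<Rightarrow> nat \<Rightarrow> real. \<exists>\<alpha>. (\<exists>s<Suc k. \<alpha> s \<noteq> 0) \<and>
        (\<Sum>x<L. (\<Sum>b<N. A b x * (\<Sum>s<Suc k. \<alpha> s * w s b))^2) \<le> lam * (\<Sum>b<N. (\<Sum>s<Suc k. \<alpha> s * w s b)^2)"
  shows "\<rho> \<le> lam"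
proof -
  have nz: "\<rho> \<noteq> 0" using pos by simp
  note F1 = eigR_F1[OF r nz] and F2 = eigR_F2[OF r nz] and F4 = eigR_F4[OF r un pos]
  define w where "w s b = (if s = 0 then (\<Sum>x<L. A b x * r x) else (\<Sum>x<L. A b x * g x (s - 1)))" for s b
  obtain \<alpha> where \<alpha>: "\<exists>s<Suc k. \<alpha> s \<noteq> 0"
    "(\<Sum>x<L. (\<Sum>b<N. A b x * (\<Sum>s<Suc k. \<alpha> s * w s b))^2) \<le> lam * (\<Sum>b<N. (\<Sum>s<Suc k. \<alpha> s * w s b)^2)"
    using H[of w] by blast
  define a0 where "a0 = \<alpha> 0"
  define c where "c j = \<alpha> (Suc j)" for j
  define Gc where "Gc x = (\<Sum>j<k. g x j * c j)" for x
  define Hm where "Hm i j = (\<Sum>y<L. g y i * g y j)" for i j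
  define d where "d i = (\<Sum>j<k. Hm i j * c j)" for i
  define Gd where "Gd x = (\<Sum>j<k. g x j * d j)" for x
  define u where "u x = a0 * r x + Gc x" for x
  define z where "z b = (\<Sum>s<Suc k. \<alpha> s * w s b)" for b
  have zu: "z b = (\<Sum>x<L. A b x * u x)" for b
  proof -
    have "z b = a0 * (\<Sum>x<L. A b x * r x) + (\<Sum>j<k. c j * (\<Sum>x<L. A b x * g x j))"
      unfolding z_def sum.lessThan_Suc_shift w_def a0_def c_def by simp
    also have "\<dots> = (\<Sum>x<L. A b x * u x)"
      unfolding u_def Gc_def
      by (simp add: sum_distrib_left distrib_left sum.distrib mult_ac sum.swap[of _ "{..<k}"])
    finally show ?thesis .
  qed
  have rGd: "(\<Sum>x<L. r x * Gd x) = 0"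
  proof -
    have "(\<Sum>x<L. r x * Gd x) = (\<Sum>j<k. \<Sum>x<L. r x * (g x j * d j))"
      unfolding Gd_def by (rule sum_mult_swap)
    also have "\<dots> = (\<Sum>j<k. d j * (\<Sum>x<L. g x j * r x))"
      by (simp add: sum_distrib_left mult_ac)
    finally show ?thesis using F1 by simp
  qed
  have rGc: "(\<Sum>x<L. r x * Gc x) = 0"
  proof -
    have "(\<Sum>x<L. r x * Gc x) = (\<Sum>j<k. \<Sum>x<L. r x * (g x j * c j))"
      unfolding Gc_def by (rule sum_mult_swap)
    also have "\<dots> = (\<Sum>j<k. c j * (\<Sum>x<L. g x j * r x))"
      by (simp add: sum_distrib_left mult_ac)
    finally show ?thesis using F1 by simp
  qed
  have Mu: "(\<Sum>y<L. Mf N A x y * u y) = a0 * \<rho> * r x + Gd x" if x: "x < L" for x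
  proof -
    have RGc: "(\<Sum>y<L. R x y * Gc y) = 0"
    proof -
      have "(\<Sum>y<L. R x y * Gc y) = (\<Sum>j<k. \<Sum>y<L. R x y * (g y j * c j))"
        unfolding Gc_def by (rule sum_mult_swap)
      also have "\<dots> = (\<Sum>j<k. c j * (\<Sum>y<L. R x y * g y j))"
        by (simp add: sum_distrib_left mult_ac)
      finally show ?thesis using first_order x by simp
    qed
    have KGc: "(\<Sum>y<L. Kf k g x y * Gc y) = Gd x"
    proof -
      have "(\<Sum>y<L. Kf k g x y * Gc y) = (\<Sum>y<L. (\<Sum>i<k. g y i * g x i) * (\<Sum>j<k. g y j * c j))"
        unfolding Kf_def Gc_def by (simp add: mult_ac)
      also have "\<dots> = (\<Sum>i<k. g x i * (\<Sum>j<k. (\<Sum>y<L. g y i * g y j) * c j))" by (rule tri)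
      also have "\<dots> = Gd x" unfolding Gd_def d_def Hm_def ..
      finally show ?thesis .
    qed
    have "(\<Sum>y<L. Mf N A x y * u y) = a0 * (\<Sum>y<L. Mf N A x y * r y) + (\<Sum>y<L. R x y * Gc y)
       + (\<Sum>y<L. Kf k g x y * Gc y)"
      unfolding u_def by (simp add: sum.distrib[symmetric] sum_distrib_left algebra_simps)
    also have "\<dots> = a0 * \<rho> * r x + Gd x" using F2[OF x] RGc KGc by simp
    finally show ?thesis .
  qed
  have Az: "(\<Sum>b<N. A b x * z b) = (\<Sum>y<L. Mf N A x y * u y)" for x
  proof -
    have "(\<Sum>b<N. A b x * z b) = (\<Sum>b<N. \<Sum>y<L. A b x * (A b y * u y))"
      unfolding zu by (simp add: sum_distrib_left)
    also have "\<dots> = (\<Sum>y<L. \<Sum>b<N. A b x * (A b y * u y))" by (rule sum.swap)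
    also have "\<dots> = (\<Sum>y<L. Mf N A x y * u y)" unfolding Mf_def
      by (simp add: sum_distrib_right sum_distrib_left mult_ac)
    finally show ?thesis .
  qed
  have GcGd: "(\<Sum>x<L. Gc x * Gd x) = (\<Sum>j<k. d j * d j)"
  proof -
    have "(\<Sum>x<L. Gc x * Gd x) = (\<Sum>x<L. (\<Sum>i<k. g x i * d i) * (\<Sum>j<k. g x j * c j))"
      unfolding Gc_def Gd_def by (simp add: mult_ac)
    also have "\<dots> = (\<Sum>i<k. d i * (\<Sum>j<k. (\<Sum>y<L. g y i * g y j) * c j))" by (rule tri)
    finally show ?thesis unfolding d_def Hm_def .
  qed
  have GcGc: "(\<Sum>x<L. (Gc x)^2) = (\<Sum>j<k. c j * d j)"
  proof -
    have "(\<Sum>x<L. (Gc x)^2) = (\<Sum>x<L. (\<Sum>i<k. g x i * c i) * (\<Sum>j<k. g x j * c j))"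
      unfolding Gc_def by (simp add: power2_eq_square)
    also have "\<dots> = (\<Sum>i<k. c i * (\<Sum>j<k. (\<Sum>y<L. g y i * g y j) * c j))" by (rule tri)
    finally show ?thesis unfolding d_def Hm_def .
  qed
  define zq where "zq = (\<Sum>x<L. (\<Sum>b<N. A b x * z b)^2)"
  define zn where "zn = (\<Sum>b<N. (z b)^2)"
  have zq: "zq = a0^2 * \<rho>^2 + (\<Sum>x<L. (Gd x)^2)"
  proof -
    have "zq = (\<Sum>x<L. (a0 * \<rho> * r x + Gd x)^2)" unfolding zq_def using Az Mu by simp
    also have "\<dots> = (a0 * \<rho>)^2 * (\<Sum>x<L. r x * r x) + 2 * (a0 * \<rho>) * (\<Sum>x<L. r x * Gd x) + (\<Sum>x<L. (Gd x)^2)"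
      by (simp add: power2_eq_square algebra_simps sum.distrib sum_distrib_left)
    also have "\<dots> = a0^2 * \<rho>^2 + (\<Sum>x<L. (Gd x)^2)" using un rGd by (simp add: power_mult_distrib)
    finally show ?thesis .
  qed
  have zn: "zn = a0^2 * \<rho> + (\<Sum>j<k. d j * d j)"
  proof -
    have "zn = (\<Sum>b<N. (\<Sum>x<L. A b x * u x) * (\<Sum>y<L. A b y * u y))"
      unfolding zn_def zu by (simp add: power2_eq_square)
    also have "\<dots> = (\<Sum>x<L. u x * (\<Sum>y<L. Mf N A x y * u y))"
      unfolding Mf_def by (rule gram_bil[symmetric])
    also have "\<dots> = (\<Sum>x<L. (a0 * r x + Gc x) * (a0 * \<rho> * r x + Gd x))"
      using Mu by (simp add: u_def)
    also have "\<dots> = a0^2 * \<rho> * (\<Sum>x<L. r x * r x) + a0 * (\<Sum>x<L. r x * Gd x)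
        + a0 * \<rho> * (\<Sum>x<L. r x * Gc x) + (\<Sum>x<L. Gc x * Gd x)"
      by (simp add: power2_eq_square algebra_simps sum.distrib sum_distrib_left)
    also have "\<dots> = a0^2 * \<rho> + (\<Sum>j<k. d j * d j)" using un rGd rGc GcGd by simp
    finally show ?thesis .
  qed
  have dd: "\<rho> * (\<Sum>j<k. d j * d j) \<le> (\<Sum>x<L. (Gd x)^2)"
    using F4[of d] unfolding Gd_def .
  have lower: "\<rho> * zn \<le> zq" unfolding zq zn using dd pos
    by (simp add: power2_eq_square algebra_simps)
  have znpos: "zn > 0"
  proof (cases "a0 = 0")
    case False
    have "a0^2 * \<rho> > 0" using False pos by simp
    moreover have "(\<Sum>j<k. d j * d j) \<ge> 0" by (intro sum_nonneg) auto
    ultimately show ?thesis unfolding zn by simp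
  next
    case True
    then obtain s where s: "s < Suc k" "\<alpha> s \<noteq> 0" "s \<noteq> 0" using \<alpha>(1) a0_def by auto
    then obtain j where j: "j < k" "c j \<noteq> 0" unfolding c_def by (cases s) auto
    have cc: "(\<Sum>j<k. c j * c j) > 0"
      by (rule sum_pos2[of _ j]) (use j in \<open>auto simp del: not_real_square_gt_zero intro: mult_le_0_iff\<close>, metis j(2) not_real_square_gt_zero)
    have "(\<Sum>j<k. c j * d j) > 0"
    proof -
      have "\<rho> * (\<Sum>j<k. c j * c j) > 0" using cc pos by simp
      moreover have "\<rho> * (\<Sum>j<k. c j * c j) \<le> (\<Sum>x<L. (Gc x)^2)" using F4[of c] unfolding Gc_def .
      ultimately show ?thesis using GcGc by linarith
    qed
    hence "\<exists>j<k. d j \<noteq> 0" by (metis (no_types, lifting) lessThan_iff mult_zero_right sum.neutral less_irrefl)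
    then obtain j' where "j' < k" "d j' \<noteq> 0" by auto
    hence "(\<Sum>j<k. d j * d j) > 0" by (intro sum_pos2[of _ j']) (auto, metis not_real_square_gt_zero)
    thus ?thesis unfolding zn using True by simp
  qed
  have "zq \<le> lam * zn" using \<alpha>(2) unfolding zq_def zn_def z_def .
  hence "\<rho> * zn \<le> lam * zn" using lower by linarith
  thus ?thesis using znpos by simp
qed

lemma R_bound:
  assumes H: "\<And>w :: nat \<Rightarrow> nat \<Rightarrow> real. \<exists>\<alpha>. (\<exists>s<Suc k. \<alpha> s \<noteq> 0) \<and>
        (\<Sum>x<L. (\<Sum>b<N. A b x * (\<Sum>s<Suc k. \<alpha> s * w s b))^2) \<le> lam * (\<Sum>b<N. (\<Sum>s<Suc k. \<alpha> s * w s b)^2)"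
    and lam0: "lam \<ge> 0"
  shows "0 \<le> (\<Sum>x<L. v x * (\<Sum>y<L. R x y * v y))"
    and "(\<Sum>x<L. v x * (\<Sum>y<L. R x y * v y)) \<le> lam * (\<Sum>x<L. v x * v x)"
proof -
  obtain q \<rho> where q: "orthn L L q" and eig: "\<forall>i<L. \<forall>a<L. (\<Sum>b<L. R a b * q i b) = \<rho> i * q i a"
    using spectral[of L R] R_sym by blast
  have rng: "0 \<le> \<rho> i \<and> \<rho> i \<le> lam" if i: "i < L" for i
  proof -
    have e: "\<forall>x<L. (\<Sum>y<L. R x y * q i y) = \<rho> i * q i x" using eig i by auto
    have u: "(\<Sum>x<L. q i x * q i x) = 1" using q i unfolding orthn_def by auto
    have "0 \<le> \<rho> i" by (rule eigR_F3[OF e u])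
    moreover have "\<rho> i \<le> lam"
    proof (cases "\<rho> i > 0")
      case True
      show ?thesis by (rule rho_le[OF e u True H])
    qed (use lam0 in auto)
    ultimately show ?thesis by simp
  qed
  note qs = quad_spec[OF q eig, of v]
  show "0 \<le> (\<Sum>x<L. v x * (\<Sum>y<L. R x y * v y))" unfolding qs(1)
    using rng by (intro sum_nonneg) auto
  have "(\<Sum>i<L. \<rho> i * (\<Sum>a<L. q i a * v a)^2) \<le> (\<Sum>i<L. lam * (\<Sum>a<L. q i a * v a)^2)"
    using rng by (intro sum_mono mult_right_mono) auto
  thus "(\<Sum>x<L. v x * (\<Sum>y<L. R x y * v y)) \<le> lam * (\<Sum>x<L. v x * v x)"
    unfolding qs by (simp add: sum_distrib_left)
qed

end

lemma S_side:
  fixes A vq :: "nat \<Rightarrow> nat \<Rightarrow> real" and l :: "nat \<Rightarrow> real" and w :: "nat \<Rightarrow> nat \<Rightarrow> real"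
  assumes vq: "orthn N N vq"
    and eig: "\<forall>i<N. \<forall>a<N. (\<Sum>b<N. (\<Sum>x<L. A a x * A b x) * vq i b) = l i * vq i a"
    and p: "p permutes {..<N}" and hl: "\<And>j. j < N \<Longrightarrow> k \<le> j \<Longrightarrow> l (p j) \<le> lam"
    and kN: "k < N"
  shows "\<exists>\<alpha>. (\<exists>s<Suc k. \<alpha> s \<noteq> 0) \<and>
        (\<Sum>x<L. (\<Sum>b<N. A b x * (\<Sum>s<Suc k. \<alpha> s * w s b))^2) \<le> lam * (\<Sum>b<N. (\<Sum>s<Suc k. \<alpha> s * w s b)^2)"
proof -
  obtain \<alpha> where \<alpha>: "\<exists>s<Suc k. \<alpha> s \<noteq> 0"
    "\<forall>t<k. (\<Sum>s<Suc k. (\<Sum>b<N. vq (p t) b * w s b) * \<alpha> s) = 0"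
    using kernel_nontriv[of k "Suc k" "\<lambda>t s. (\<Sum>b<N. vq (p t) b * w s b)"] by auto
  define z where "z b = (\<Sum>s<Suc k. \<alpha> s * w s b)" for b
  define cz where "cz i = (\<Sum>a<N. vq i a * z a)" for i
  have cz0: "cz (p t) = 0" if "t < k" for t
  proof -
    have "cz (p t) = (\<Sum>s<Suc k. \<Sum>b<N. vq (p t) b * (\<alpha> s * w s b))"
      unfolding cz_def z_def by (rule sum_mult_swap)
    also have "\<dots> = (\<Sum>s<Suc k. (\<Sum>b<N. vq (p t) b * w s b) * \<alpha> s)"
      by (simp add: sum_distrib_left sum_distrib_right mult_ac)
    finally show ?thesis using \<alpha>(2) that by simp
  qed
  define Sf where "Sf a b = (\<Sum>x<L. A a x * A b x)" for a b
  have eig': "\<forall>i<N. \<forall>a<N. (\<Sum>b<N. Sf a b * vq i b) = l i * vq i a" using eig unfolding Sf_def .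
  note qs = quad_spec[OF vq eig', of z]
  have zq: "(\<Sum>x<L. (\<Sum>b<N. A b x * z b)^2) = (\<Sum>b<N. z b * (\<Sum>c<N. Sf b c * z c))"
  proof -
    have "(\<Sum>b<N. z b * (\<Sum>c<N. Sf b c * z c))
        = (\<Sum>x<L. (\<Sum>b<N. A b x * z b) * (\<Sum>c<N. A c x * z c))"
      unfolding Sf_def by (rule gram_bil)
    thus ?thesis by (simp add: power2_eq_square)
  qed
  have termb: "l i * (cz i)^2 \<le> lam * (cz i)^2" if i: "i < N" for i
  proof -
    obtain j where j: "j < N" "p j = i" using p i by (metis lessThan_iff permutes_def)
    show ?thesis
    proof (cases "j < k")
      case True
      thus ?thesis using cz0 j by auto
    next
      case False
      thus ?thesis using hl[OF j(1)] j by (intro mult_right_mono) auto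
    qed
  qed
  have "(\<Sum>i<N. l i * (cz i)^2) \<le> (\<Sum>i<N. lam * (cz i)^2)"
    using termb by (intro sum_mono) auto
  also have "\<dots> = lam * (\<Sum>i<N. (cz i)^2)" by (simp add: sum_distrib_left)
  finally have "(\<Sum>x<L. (\<Sum>b<N. A b x * z b)^2) \<le> lam * (\<Sum>b<N. z b * z b)"
    unfolding zq qs cz_def .
  thus ?thesis using \<alpha>(1) unfolding z_def by (intro exI[of _ \<alpha>]) (simp add: power2_eq_square)
qed

lemma loss_eq:
  fixes P f :: "nat \<Rightarrow> nat \<Rightarrow> real"
  assumes dpos: "\<And>x. x < L \<Longrightarrow> deg N P x > 0" and N: "N > 0"
  defines "a \<equiv> \<lambda>b x. P b x / sqrt (deg N P x)"
  shows "loss_ACA_PC N L k P f =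
     (Phi N L k a (\<lambda>x j. sqrt (deg N P x) * f x j) - (\<Sum>x<L. \<Sum>y<L. (Mf N a x y)^2)) / N"
proof -
  define g where "g x j = sqrt (deg N P x) * f x j" for x j
  define K where "K x y = Kf k g x y" for x y
  define M where "M x y = Mf N a x y" for x y
  have pA: "p_A N P x = deg N P x / N" for x
    unfolding p_A_def p_bar_def deg_def by (simp add: sum_divide_distrib)
  have Pa: "P b x = a b x * sqrt (deg N P x)" if "x < L" for b x
    using dpos[OF that] unfolding a_def by simp
  have Kg: "K x y = sqrt (deg N P x) * sqrt (deg N P y) * inner_k k f x y" for x y
    unfolding K_def Kf_def g_def inner_k_def by (simp add: sum_distrib_left mult_ac)
  have T1: "(\<Sum>xb<N. \<Sum>xi<L. \<Sum>xj<L. p_bar N xb * P xb xi * P xb xj * inner_k k f xi xj)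
      = (\<Sum>xi<L. \<Sum>xj<L. M xi xj * K xi xj) / N"
  proof -
    have "(\<Sum>xb<N. \<Sum>xi<L. \<Sum>xj<L. p_bar N xb * P xb xi * P xb xj * inner_k k f xi xj)
        = (\<Sum>xb<N. \<Sum>xi<L. \<Sum>xj<L. (a xb xi * a xb xj) * K xi xj / N)"
      by (intro sum.cong refl) (simp add: Pa Kg p_bar_def mult_ac)
    also have "\<dots> = (\<Sum>xi<L. \<Sum>xb<N. \<Sum>xj<L. (a xb xi * a xb xj) * K xi xj / N)"
      by (rule sum.swap)
    also have "\<dots> = (\<Sum>xi<L. \<Sum>xj<L. \<Sum>xb<N. (a xb xi * a xb xj) * K xi xj / N)"
      by (rule sum.cong, simp, rule sum.swap)
    also have "\<dots> = (\<Sum>xi<L. \<Sum>xj<L. M xi xj * K xi xj / N)"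
      unfolding M_def Mf_def by (simp add: sum_distrib_right sum_divide_distrib)
    also have "\<dots> = (\<Sum>xi<L. \<Sum>xj<L. M xi xj * K xi xj) / N"
      by (simp add: sum_divide_distrib)
    finally show ?thesis .
  qed
  have T2: "real N * (\<Sum>x1<L. \<Sum>x2<L. p_A N P x1 * p_A N P x2 * (inner_k k f x1 x2)^2)
      = (\<Sum>x1<L. \<Sum>x2<L. (K x1 x2)^2) / N"
  proof -
    have "real N * (\<Sum>x1<L. \<Sum>x2<L. p_A N P x1 * p_A N P x2 * (inner_k k f x1 x2)^2)
       = (\<Sum>x1<L. \<Sum>x2<L. real N * (p_A N P x1 * p_A N P x2 * (inner_k k f x1 x2)^2))"
      by (simp add: sum_distrib_left)
    also have "\<dots> = (\<Sum>x1<L. \<Sum>x2<L. (K x1 x2)^2 / N)"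
    proof (intro sum.cong refl)
      fix x1 x2 assume x: "x1 \<in> {..<L}" "x2 \<in> {..<L}"
      have d: "deg N P x1 \<ge> 0" "deg N P x2 \<ge> 0" using dpos x by (auto intro: less_imp_le)
      show "real N * (p_A N P x1 * p_A N P x2 * (inner_k k f x1 x2)^2) = (K x1 x2)^2 / N"
        unfolding pA Kg using N d by (simp add: power2_eq_square field_simps real_sqrt_mult[symmetric])
    qed
    also have "\<dots> = (\<Sum>x1<L. \<Sum>x2<L. (K x1 x2)^2) / N" by (simp add: sum_divide_distrib)
    finally show ?thesis .
  qed
  have Ph: "Phi N L k a g = (\<Sum>x<L. \<Sum>y<L. (M x y)^2) - 2 * (\<Sum>x<L. \<Sum>y<L. M x y * K x y)
      + (\<Sum>x<L. \<Sum>y<L. (K x y)^2)"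
    unfolding Phi_def M_def[symmetric] K_def[symmetric]
    by (simp add: power2_eq_square algebra_simps sum.distrib sum_subtractf sum_distrib_left)
  show ?thesis
    unfolding loss_ACA_PC_def T1 T2 g_def[symmetric] Ph M_def[symmetric] using N
    by (simp add: field_simps)
qed

lemma sum_list_singletons: "sum_list (map (\<lambda>i. {#f i#}) xs) = mset (map f xs)"
  by (induct xs) auto

lemma sv_lemma:
  fixes a vq :: "nat \<Rightarrow> nat \<Rightarrow> real" and l :: "nat \<Rightarrow> real" and Ahat :: "real mat"
  assumes NL: "N \<le> L" and kN: "k < N"
    and vq: "orthn N N vq"
    and eig: "\<forall>i<N. \<forall>b<N. (\<Sum>c<N. (\<Sum>x<L. a b x * a c x) * vq i c) = l i * vq i b"
    and lpos: "\<And>i. i < N \<Longrightarrow> l i \<ge> 0"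
    and Ahat: "Ahat = mat N L (\<lambda>(b,x). a b x)"
  shows "\<exists>p lam. p permutes {..<N} \<and> (\<forall>j<N. k \<le> j \<longrightarrow> l (p j) \<le> lam) \<and> lam \<ge> 0
     \<and> (singular_values Ahat ! k)^2 = lam"
proof -
  define Sf where "Sf b c = (\<Sum>x<L. a b x * a c x)" for b c
  have G: "Ahat * transpose_mat Ahat = mat N N (\<lambda>(b,c). Sf b c)"
    unfolding Ahat Sf_def
    by (rule eq_matI) (auto simp: scalar_prod_def lessThan_atLeast0 intro!: sum.cong)
  have cp: "char_poly (mat N N (\<lambda>(b,c). Sf b c)) = (\<Prod>i\<leftarrow>[0..<N]. [:- l i, 1:])"
    by (rule char_poly_spectral[OF vq]) (use eig in \<open>simp add: Sf_def\<close>)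
  have pr: "proots (\<Prod>i\<leftarrow>[0..<N]. [:- l i, 1:]) = mset (map l [0..<N])"
  proof -
    have "proots (\<Prod>i\<leftarrow>[0..<N]. [:- l i, 1:]) = sum_list (map proots (map (\<lambda>i. [:- l i, 1:]) [0..<N]))"
    proof -
      have nz: "0 \<notin> set (map (\<lambda>i. [:- l i, 1:]) [0..<N])" by auto
      show ?thesis using proots_prod_list[OF nz] by simp
    qed
    also have "\<dots> = sum_list (map (\<lambda>i. {#l i#}) [0..<N])"
      by (simp add: comp_def)
    also have "\<dots> = mset (map l [0..<N])" by (rule sum_list_singletons)
    finally show ?thesis .
  qed
  define ls where "ls = rev (sort (map l [0..<N]))"
  have dims: "dim_row Ahat = N" "dim_col Ahat = L" unfolding Ahat by auto
  have sv: "singular_values Ahat = map sqrt ls"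
    unfolding singular_values_def Let_def dims using NL by (simp only: if_True G cp pr sorted_list_of_multiset_mset ls_def)
  have len: "length ls = N" unfolding ls_def by simp
  have "mset ls = mset (map l [0..<N])" unfolding ls_def by simp
  then obtain p where p: "p permutes {..<length (map l [0..<N])}" "permute_list p (map l [0..<N]) = ls"
    by (rule mset_eq_permutation)
  have p': "p permutes {..<N}" using p(1) by simp
  have lsp: "ls ! j = l (p j)" if "j < N" for j
  proof -
    have "ls ! j = (map l [0..<N]) ! p j" using permute_list_nth[OF p(1)] that p(2) by force
    moreover have "p j < N" using permutes_in_image[OF p', of j] that by simp
    ultimately show ?thesis by simp
  qed
  have mono: "ls ! j \<le> ls ! k" if "k \<le> j" "j < N" for j
  proof -
    have s: "sorted (sort (map l [0..<N]))" by simp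
    have "ls ! j = sort (map l [0..<N]) ! (N - Suc j)" unfolding ls_def using that by (simp add: rev_nth)
    moreover have "ls ! k = sort (map l [0..<N]) ! (N - Suc k)" unfolding ls_def using that kN by (simp add: rev_nth)
    moreover have "sort (map l [0..<N]) ! (N - Suc j) \<le> sort (map l [0..<N]) ! (N - Suc k)"
      by (rule sorted_nth_mono[OF s]) (use that kN in auto)
    ultimately show ?thesis by simp
  qed
  have "\<forall>j<N. k \<le> j \<longrightarrow> l (p j) \<le> ls ! k" using mono lsp by auto
  moreover have "ls ! k \<ge> 0" using lsp[OF kN] lpos[of "p k"] permutes_in_image[OF p', of k] kN by simp
  moreover have "(singular_values Ahat ! k)^2 = ls ! k" unfolding sv using len kN \<open>ls ! k \<ge> 0\<close> by simp
  ultimately show ?thesis using p' by blast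
qed

theorem theorem4p2:
  fixes N L k :: nat and P :: "nat \<Rightarrow> nat \<Rightarrow> real" and fstar :: "nat \<Rightarrow> nat \<Rightarrow> real"
  assumes "N < L"
    and "1 \<le> k" and "k < N"
    and "\<And>xb x. xb < N \<Longrightarrow> x < L \<Longrightarrow> P xb x \<ge> 0"
    and "\<And>xb. xb < N \<Longrightarrow> (\<Sum>x<L. P xb x) = 1"
    and "\<And>x. x < L \<Longrightarrow> deg N P x > 0"
    and "\<And>g. loss_ACA_PC N L k P fstar \<le> loss_ACA_PC N L k P g"
    and "x1 < L" and "x2 < L"
  shows "d_post_sq N P x1 x2
           - 2 * (singular_values (norm_aug_feature N L P) ! k)^2
               / Min (deg N P ` {..<L}) * (if x1 = x2 then 0 else 1)
         \<le> (\<Sum>j<k. (fstar x1 j - fstar x2 j)^2)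
       \<and> (\<Sum>j<k. (fstar x1 j - fstar x2 j)^2) \<le> d_post_sq N P x1 x2"
proof (cases "x1 = x2")
  case True
  thus ?thesis unfolding d_post_sq_def by simp
next
  case neq: False
  note NL = assms(1) and kN = assms(3) and dpos = assms(6) and minf = assms(7) and x1 = assms(8) and x2 = assms(9)
  have N: "N > 0" using kN by simp
  define a where "a = (\<lambda>b x. P b x / sqrt (deg N P x))"
  define g where "g x j = sqrt (deg N P x) * fstar x j" for x j
  define C0 where "C0 = (\<Sum>x<L. \<Sum>y<L. (Mf N a x y)^2)"
  have LE: "loss_ACA_PC N L k P f = (Phi N L k a (\<lambda>x j. sqrt (deg N P x) * f x j) - C0) / N" for f
    unfolding a_def C0_def by (rule loss_eq[OF dpos N])
  interpret mini N L k a g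
  proof
    fix g' :: "nat \<Rightarrow> nat \<Rightarrow> real"
    define f' where "f' x j = g' x j / sqrt (deg N P x)" for x j
    have "Phi N L k a (\<lambda>x j. sqrt (deg N P x) * f' x j) = Phi N L k a g'"
    proof -
      have e: "sqrt (deg N P x) * f' x j = g' x j" if "x < L" for x j
        using dpos[OF that] unfolding f'_def by simp
      show ?thesis unfolding Phi_def Kf_def by (intro sum.cong refl) (simp add: e)
    qed
    moreover have "Phi N L k a (\<lambda>x j. sqrt (deg N P x) * fstar x j) = Phi N L k a g" unfolding g_def ..
    moreover have "(Phi N L k a (\<lambda>x j. sqrt (deg N P x) * fstar x j) - C0) / N
        \<le> (Phi N L k a (\<lambda>x j. sqrt (deg N P x) * f' x j) - C0) / N"
      using minf[of f'] unfolding LE .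
    ultimately have "(Phi N L k a g - C0) / N \<le> (Phi N L k a g' - C0) / N" by simp
    thus "Phi N L k a g \<le> Phi N L k a g'" using N by (simp add: divide_le_cancel)
  qed
  define Sf where "Sf b c = (\<Sum>x<L. a b x * a c x)" for b c
  have Ssym: "Sf b c = Sf c b" for b c unfolding Sf_def by (simp add: mult.commute)
  obtain vq l where vq: "orthn N N vq" and eig: "\<forall>i<N. \<forall>b<N. (\<Sum>c<N. Sf b c * vq i c) = l i * vq i b"
    using spectral[of N Sf] Ssym by blast
  have lpos: "l i \<ge> 0" if i: "i < N" for i
  proof -
    have "l i = (\<Sum>b<N. vq i b * (l i * vq i b))"
      using vq i unfolding orthn_def by (simp add: sum_distrib_left[symmetric] mult_ac)
    also have "\<dots> = (\<Sum>b<N. vq i b * (\<Sum>c<N. Sf b c * vq i c))" using eig i by simp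
    also have "\<dots> = (\<Sum>x<L. (\<Sum>b<N. a b x * vq i b) * (\<Sum>c<N. a c x * vq i c))"
      unfolding Sf_def by (rule gram_bil[where F = "\<lambda>x b. a b x", simplified])
    also have "\<dots> \<ge> 0" by (intro sum_nonneg) auto
    finally show ?thesis .
  qed
  have Ahat: "norm_aug_feature N L P = mat N L (\<lambda>(b,x). a b x)"
  proof (rule eq_matI)
    fix b x assume bx: "b < dim_row (mat N L (\<lambda>(b,x). a b x))" "x < dim_col (mat N L (\<lambda>(b,x). a b x))"
    hence bx': "b < N" "x < L" by auto
    have "norm_aug_feature N L P $$ (b,x) = (\<Sum>y<L. P b y * (if y = x then 1 / sqrt (deg N P y) else 0))"
      unfolding norm_aug_feature_def aug_feature_def using bx'
      by (auto simp: scalar_prod_def lessThan_atLeast0 intro!: sum.cong)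
    also have "\<dots> = (\<Sum>y<L. if y = x then P b x / sqrt (deg N P x) else 0)" by (rule sum.cong) auto
    also have "\<dots> = a b x" using bx' unfolding a_def by simp
    finally show "norm_aug_feature N L P $$ (b,x) = mat N L (\<lambda>(b,x). a b x) $$ (b,x)" using bx' by simp
  qed (auto simp: norm_aug_feature_def aug_feature_def)
  have eig2: "\<forall>i<N. \<forall>b<N. (\<Sum>c<N. (\<Sum>x<L. a b x * a c x) * vq i c) = l i * vq i b"
    using eig unfolding Sf_def .
  obtain p lam where p: "p permutes {..<N}" and hl: "\<forall>j<N. k \<le> j \<longrightarrow> l (p j) \<le> lam"
    and lam0: "lam \<ge> 0" and svk: "(singular_values (norm_aug_feature N L P) ! k)^2 = lam"
    using sv_lemma[OF less_imp_le[OF NL] kN vq eig2 lpos Ahat] by blast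
  have H: "\<exists>\<alpha>. (\<exists>s<Suc k. \<alpha> s \<noteq> 0) \<and>
        (\<Sum>x<L. (\<Sum>b<N. a b x * (\<Sum>s<Suc k. \<alpha> s * w s b))^2) \<le> lam * (\<Sum>b<N. (\<Sum>s<Suc k. \<alpha> s * w s b)^2)"
    for w :: "nat \<Rightarrow> nat \<Rightarrow> real"
  proof -
    have hl': "\<And>j. j < N \<Longrightarrow> k \<le> j \<Longrightarrow> l (p j) \<le> lam" using hl by blast
    show ?thesis by (rule S_side[OF vq eig2 p hl' kN])
  qed
  define s1 where "s1 = sqrt (deg N P x1)"
  define s2 where "s2 = sqrt (deg N P x2)"
  have s1: "s1 > 0" "s1 * s1 = deg N P x1" unfolding s1_def using dpos[OF x1] by auto
  have s2: "s2 > 0" "s2 * s2 = deg N P x2" unfolding s2_def using dpos[OF x2] by auto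
  define v where "v x = (if x = x1 then 1 / s1 else 0) - (if x = x2 then 1 / s2 else 0)" for x
  have vsum: "(\<Sum>x<L. F x * v x) = F x1 / s1 - F x2 / s2" for F :: "nat \<Rightarrow> real"
  proof -
    have "(\<Sum>x<L. F x * v x) = (\<Sum>x<L. (if x = x1 then F x1 / s1 else 0) - (if x = x2 then F x2 / s2 else 0))"
      unfolding v_def using neq by (intro sum.cong) auto
    also have "\<dots> = F x1 / s1 - F x2 / s2" using x1 x2 by (simp add: sum_subtractf)
    finally show ?thesis .
  qed
  have post: "post N P b x = P b x / deg N P x" for b x
  proof -
    have "p_A N P x = deg N P x / N" unfolding p_A_def p_bar_def deg_def by (simp add: sum_divide_distrib)
    thus ?thesis unfolding post_def p_bar_def using N by (simp add: field_simps)
  qed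
  have vMv: "(\<Sum>x<L. v x * (\<Sum>y<L. Mf N a x y * v y)) = d_post_sq N P x1 x2"
  proof -
    have "(\<Sum>x<L. v x * (\<Sum>y<L. Mf N a x y * v y))
       = (\<Sum>b<N. (\<Sum>x<L. a b x * v x) * (\<Sum>y<L. a b y * v y))"
      unfolding Mf_def by (rule gram_bil)
    also have "\<dots> = (\<Sum>b<N. (post N P b x1 - post N P b x2)^2)"
    proof (rule sum.cong, simp)
      fix b
      have "(\<Sum>x<L. a b x * v x) = post N P b x1 - post N P b x2"
        unfolding vsum post a_def s1_def[symmetric] s2_def[symmetric] s1(2)[symmetric] s2(2)[symmetric]
        using s1(1) s2(1) by (simp add: field_simps)
      thus "(\<Sum>x<L. a b x * v x) * (\<Sum>y<L. a b y * v y) = (post N P b x1 - post N P b x2)^2"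
        by (simp add: power2_eq_square)
    qed
    finally show ?thesis unfolding d_post_sq_def .
  qed
  have vKv: "(\<Sum>x<L. v x * (\<Sum>y<L. Kf k g x y * v y)) = (\<Sum>j<k. (fstar x1 j - fstar x2 j)^2)"
  proof -
    have "(\<Sum>x<L. v x * (\<Sum>y<L. Kf k g x y * v y))
       = (\<Sum>j<k. (\<Sum>x<L. g x j * v x) * (\<Sum>y<L. g y j * v y))"
      unfolding Kf_def by (rule gram_bil[where F = "\<lambda>j x. g x j", simplified])
    also have "\<dots> = (\<Sum>j<k. (fstar x1 j - fstar x2 j)^2)"
    proof (rule sum.cong, simp)
      fix j
      have "(\<Sum>x<L. g x j * v x) = fstar x1 j - fstar x2 j"
        unfolding vsum g_def s1_def[symmetric] s2_def[symmetric] using s1 s2 by simp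
      thus "(\<Sum>x<L. g x j * v x) * (\<Sum>y<L. g y j * v y) = (fstar x1 j - fstar x2 j)^2"
        by (simp add: power2_eq_square)
    qed
    finally show ?thesis .
  qed
  have vRv: "(\<Sum>x<L. v x * (\<Sum>y<L. R x y * v y)) = d_post_sq N P x1 x2 - (\<Sum>j<k. (fstar x1 j - fstar x2 j)^2)"
    unfolding vMv[symmetric] vKv[symmetric]
    by (simp add: left_diff_distrib right_diff_distrib sum_subtractf)
  have vv: "(\<Sum>x<L. v x * v x) = 1 / deg N P x1 + 1 / deg N P x2"
    unfolding vsum using neq s1 s2 by (simp add: v_def field_simps)
  define dmin where "dmin = Min (deg N P ` {..<L})"
  have dmin: "dmin > 0" "dmin \<le> deg N P x1" "dmin \<le> deg N P x2"
  proof -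
    have ne: "deg N P ` {..<L} \<noteq> {}" using x1 by auto
    have "dmin \<in> deg N P ` {..<L}" unfolding dmin_def by (rule Min_in[OF _ ne]) auto
    thus "dmin > 0" using dpos by auto
    show "dmin \<le> deg N P x1" "dmin \<le> deg N P x2" unfolding dmin_def using x1 x2 by auto
  qed
  have "1 / deg N P x1 \<le> 1 / dmin" "1 / deg N P x2 \<le> 1 / dmin"
    using dmin by (auto intro!: divide_left_mono)
  hence vvle: "(\<Sum>x<L. v x * v x) \<le> 2 / dmin" unfolding vv by simp
  have up: "(\<Sum>j<k. (fstar x1 j - fstar x2 j)^2) \<le> d_post_sq N P x1 x2"
    using R_bound(1)[OF H lam0, of v] unfolding vRv by simp
  have "d_post_sq N P x1 x2 - (\<Sum>j<k. (fstar x1 j - fstar x2 j)^2) \<le> lam * (\<Sum>x<L. v x * v x)"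
    using R_bound(2)[OF H lam0, of v] unfolding vRv .
  also have "\<dots> \<le> lam * (2 / dmin)" using vvle lam0 by (rule mult_left_mono)
  finally have low: "d_post_sq N P x1 x2 - 2 * lam / dmin \<le> (\<Sum>j<k. (fstar x1 j - fstar x2 j)^2)" by simp
  show ?thesis using up low neq unfolding svk dmin_def[symmetric] by simp
qed


end
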